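(* Given a (finite) P/T net with silent moves $N=(S,A,T)$ and a place relation $R\subseteq S\times S$, it is decidable whether $R$ is a branching place bisimulation.
   Context: A P/T net with silent moves is $N=(S,A,T)$: $S$ a finite set of places, $A$ a finite set of labels containing the silent label $\tau$, $T\subseteq(\mathcal{M}(S)\setminus\{\theta\})\times A\times\mathcal{M}(S)$ a finite set of transitions ($\mathcal{M}(S)$ the finite multisets over $S$, $\theta$ empty, $\oplus$ union, $\ominus$ truncated difference). For $t=(m,\ell,m')$: ${}^\bullet t=m$, $l(t)=\ell$, $t^\bullet=m'$. $m[t\rangle m'$ iff ${}^\bullet t\subseteq m$ and $m'=(m\ominus{}^\bullet t)\oplus t^\bullet$; firing sequences by concatenation. Idling transitions: $i(s)=(s,\tau,s)$ for $s\in S$ (not in $T$, usable in silent sequences, firing by the same rule). A transition is $\tau$-sequential if $l(t)=\tau$ and $|{}^\bullet t|=|t^\bullet|=1$. Pre/post-sets of sequences: ${}^\bullet\epsilon=\theta$, ${}^\bullet(t\sigma)={}^\bullet t\oplus({}^\bullet\sigma\ominus t^\bullet)$, $\epsilon^\bullet=\theta$, $(t\sigma)^\bullet=\sigma^\bullet\oplus(t^\bullet\ominus{}^\bullet\sigma)$. A sequence $\sigma=t_1\dots t_n$ ($n\ge1$, $t_i$ in $T$ or idling) is $\tau$-1-sequential if each $t_i$ has label $\tau$ and singleton pre- and post-set and $t_i^\bullet={}^\bullet t_{i+1}$; $\sigma=\sigma_1\cdots\sigma_k$ is $\tau$-$k$-sequential if each $\sigma_i$ is $\tau$-1-sequential,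 ${}^\bullet\sigma=\bigoplus_i{}^\bullet\sigma_i$, $\sigma^\bullet=\bigoplus_i\sigma_i^\bullet$; $\sigma$ is $\tau$-sequential if $\tau$-$k$-sequential for some $k\ge1$. For $\tau$-sequential $\sigma=t_1\dots t_n$ with ${}^\bullet\sigma=m_0[t_1\rangle m_1\cdots[t_n\rangle m_n=\sigma^\bullet$ and a marking relation $Q$: $\Psi(m,\sigma,Q)$ iff $(m,m_i)\in Q$ for $i=0,\dots,n-1$; $\Phi(\sigma,m,Q)$ iff $(m_i,m)\in Q$ for $i=0,\dots,n-1$. Additive closure of $R\subseteq S\times S$: the least $R^\oplus$ with $(\theta,\theta)\in R^\oplus$ and, if $(s_1,s_2)\in R$, $(m_1,m_2)\in R^\oplus$, then $(s_1\oplus m_1,s_2\oplus m_2)\in R^\oplus$. A branching place bisimulation is $R\subseteq S\times S$ such that whenever $(m_1,m_2)\in R^\oplus$: (1) for every $t_1$ with $m_1[t_1\rangle m_1'$: (i) either $t_1$ is $\tau$-sequential and there are $\sigma,m_2'$ with $\sigma$ $\tau$-sequential, $m_2[\sigma\rangle m_2'$, $\Psi({}^\bullet t_1,\sigma,R^\oplus)$, $({}^\bullet t_1,\sigma^\bullet)\in R^\oplus$, $(t_1^\bullet,\sigma^\bullet)\in R^\oplus$, $(m_1\ominus{}^\bullet t_1,m_2\ominus{}^\bullet\sigma)\in R^\oplus$; (ii) or there are $\sigma,t_2,m,m_2'$ with $\sigma$ $\tau$-sequential, $m_2[\sigma\rangle m[t_2\rangle m_2'$, $\sigma^\bullet={}^\bullet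 t_2$, $l(t_1)=l(t_2)$, $\Psi({}^\bullet t_1,\sigma,R^\oplus)$, $({}^\bullet t_1,\sigma^\bullet)\in R^\oplus$, $(t_1^\bullet,t_2^\bullet)\in R^\oplus$, $(m_1\ominus{}^\bullet t_1,m_2\ominus{}^\bullet\sigma)\in R^\oplus$; (2) symmetrically for every $t_2$ with $m_2[t_2\rangle m_2'$: (i) either $t_2$ is $\tau$-sequential and there are $\sigma,m_1'$ with $\sigma$ $\tau$-sequential, $m_1[\sigma\rangle m_1'$, $\Phi(\sigma,{}^\bullet t_2,R^\oplus)$, $(\sigma^\bullet,{}^\bullet t_2)\in R^\oplus$, $(\sigma^\bullet,t_2^\bullet)\in R^\oplus$, $(m_1\ominus{}^\bullet\sigma,m_2\ominus{}^\bullet t_2)\in R^\oplus$; (ii) or there are $\sigma,t_1,m,m_1'$ with $\sigma$ $\tau$-sequential, $m_1[\sigma\rangle m[t_1\rangle m_1'$, $\sigma^\bullet={}^\bullet t_1$, $l(t_1)=l(t_2)$, $\Phi(\sigma,{}^\bullet t_2,R^\oplus)$, $(\sigma^\bullet,{}^\bullet t_2)\in R^\oplus$, $(t_1^\bullet,t_2^\bullet)\in R^\oplus$, $(m_1\ominus{}^\bullet\sigma,m_2\ominus{}^\bullet t_2)\in R^\oplus$. *)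

theory Defs
  imports Main "HOL-Library.Multiset" "HOL-Library.Nat_Bijection"
begin

type_synonym ('p,'l) trans = "'p multiset \<times> 'l \<times> 'p multiset"

definition pre :: "('p,'l) trans \<Rightarrow> 'p multiset" where "pre t = fst t"
definition lab :: "('p,'l) trans \<Rightarrow> 'l" where "lab t = fst (snd t)"
definition post :: "('p,'l) trans \<Rightarrow> 'p multiset" where "post t = snd (snd t)"

definition pt_net :: "'l \<Rightarrow> 'p set \<Rightarrow> 'l set \<Rightarrow> ('p,'l) trans set \<Rightarrow> bool" where
  "pt_net tau S A T \<longleftrightarrow> finite S \<and> finite A \<and> tau \<in> A \<and> finite T \<and>
     (\<forall>t\<in>T. pre t \<noteq> {#} \<and> set_mset (pre t) \<subseteq> S \<and> lab t \<in> A \<and> set_mset (post t) \<subseteq> S)"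

definition firing :: "'p multiset \<Rightarrow> ('p,'l) trans \<Rightarrow> 'p multiset \<Rightarrow> bool" where
  "firing m t m' \<longleftrightarrow> pre t \<subseteq># m \<and> m' = (m - pre t) + post t"

fun fire_seq :: "'p multiset \<Rightarrow> ('p,'l) trans list \<Rightarrow> 'p multiset \<Rightarrow> bool" where
  "fire_seq m [] m' \<longleftrightarrow> m' = m"
| "fire_seq m (t # \<sigma>) m'' \<longleftrightarrow> (\<exists>m'. firing m t m' \<and> fire_seq m' \<sigma> m'')"

definition idle :: "'l \<Rightarrow> 'p \<Rightarrow> ('p,'l) trans" where
  "idle tau s = ({#s#}, tau, {#s#})"

fun preseq :: "('p,'l) trans list \<Rightarrow> 'p multiset" where
  "preseq [] = {#}"
| "preseq (t # \<sigma>) = pre t + (preseq \<sigma> - post t)"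

fun postseq :: "('p,'l) trans list \<Rightarrow> 'p multiset" where
  "postseq [] = {#}"
| "postseq (t # \<sigma>) = postseq \<sigma> + (post t - preseq \<sigma>)"

definition tau_seq_trans :: "'l \<Rightarrow> ('p,'l) trans \<Rightarrow> bool" where
  "tau_seq_trans tau t \<longleftrightarrow> lab t = tau \<and> size (pre t) = 1 \<and> size (post t) = 1"

definition tau_1_seq :: "'l \<Rightarrow> 'p set \<Rightarrow> ('p,'l) trans set \<Rightarrow> ('p,'l) trans list \<Rightarrow> bool" where
  "tau_1_seq tau S T \<sigma> \<longleftrightarrow> \<sigma> \<noteq> [] \<and>
     (\<forall>t\<in>set \<sigma>. (t \<in> T \<or> (\<exists>s\<in>S. t = idle tau s)) \<and> tau_seq_trans tau t) \<and>
     (\<forall>i. Suc i < length \<sigma> \<longrightarrow> post (\<sigma> ! i) = pre (\<sigma> ! Suc i))"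

definition tau_k_seq :: "'l \<Rightarrow> 'p set \<Rightarrow> ('p,'l) trans set \<Rightarrow> nat \<Rightarrow> ('p,'l) trans list \<Rightarrow> bool" where
  "tau_k_seq tau S T k \<sigma> \<longleftrightarrow> (\<exists>\<sigma>s. length \<sigma>s = k \<and> \<sigma> = concat \<sigma>s \<and>
     (\<forall>\<rho>\<in>set \<sigma>s. tau_1_seq tau S T \<rho>) \<and>
     preseq \<sigma> = sum_list (map preseq \<sigma>s) \<and> postseq \<sigma> = sum_list (map postseq \<sigma>s))"

definition tau_seq :: "'l \<Rightarrow> 'p set \<Rightarrow> ('p,'l) trans set \<Rightarrow> ('p,'l) trans list \<Rightarrow> bool" where
  "tau_seq tau S T \<sigma> \<longleftrightarrow> (\<exists>k\<ge>1. tau_k_seq tau S T k \<sigma>)"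

fun befores :: "'p multiset \<Rightarrow> ('p,'l) trans list \<Rightarrow> 'p multiset list" where
  "befores m [] = []"
| "befores m (t # \<sigma>) = m # befores ((m - pre t) + post t) \<sigma>"

definition Psi :: "'p multiset \<Rightarrow> ('p,'l) trans list \<Rightarrow> ('p multiset \<times> 'p multiset) set \<Rightarrow> bool" where
  "Psi m \<sigma> Q \<longleftrightarrow> (\<forall>mi\<in>set (befores (preseq \<sigma>) \<sigma>). (m, mi) \<in> Q)"

definition Phi :: "('p,'l) trans list \<Rightarrow> 'p multiset \<Rightarrow> ('p multiset \<times> 'p multiset) set \<Rightarrow> bool" where
  "Phi \<sigma> m Q \<longleftrightarrow> (\<forall>mi\<in>set (befores (preseq \<sigma>) \<sigma>). (mi, m) \<in> Q)"

inductive_set addcl :: "('p \<times> 'p) set \<Rightarrow> ('p multiset \<times> 'p multiset) set" for R where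
  empty: "({#}, {#}) \<in> addcl R"
| add: "(s1, s2) \<in> R \<Longrightarrow> (m1, m2) \<in> addcl R \<Longrightarrow> (add_mset s1 m1, add_mset s2 m2) \<in> addcl R"

definition branching_place_bisim ::
  "'l \<Rightarrow> 'p set \<Rightarrow> 'l set \<Rightarrow> ('p,'l) trans set \<Rightarrow> ('p \<times> 'p) set \<Rightarrow> bool" where
  "branching_place_bisim tau S A T R \<longleftrightarrow> R \<subseteq> S \<times> S \<and>
    (\<forall>(m1, m2)\<in>addcl R.
      (\<forall>t1\<in>T. \<forall>m1'. firing m1 t1 m1' \<longrightarrow>
        (tau_seq_trans tau t1 \<and>
          (\<exists>\<sigma> m2'. tau_seq tau S T \<sigma> \<and> fire_seq m2 \<sigma> m2' \<and> Psi (pre t1) \<sigma> (addcl R) \<and>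
             (pre t1, postseq \<sigma>) \<in> addcl R \<and> (post t1, postseq \<sigma>) \<in> addcl R \<and>
             (m1 - pre t1, m2 - preseq \<sigma>) \<in> addcl R))
        \<or> (\<exists>\<sigma> t2 m m2'. t2 \<in> T \<and> tau_seq tau S T \<sigma> \<and> fire_seq m2 \<sigma> m \<and> firing m t2 m2' \<and>
             postseq \<sigma> = pre t2 \<and> lab t1 = lab t2 \<and> Psi (pre t1) \<sigma> (addcl R) \<and>
             (pre t1, postseq \<sigma>) \<in> addcl R \<and> (post t1, post t2) \<in> addcl R \<and>
             (m1 - pre t1, m2 - preseq \<sigma>) \<in> addcl R)) \<and>
      (\<forall>t2\<in>T. \<forall>m2'. firing m2 t2 m2' \<longrightarrow>
        (tau_seq_trans tau t2 \<and>
          (\<exists>\<sigma> m1'. tau_seq tau S T \<sigma> \<and> fire_seq m1 \<sigma> m1' \<and> Phi \<sigma> (pre t2) (addcl R) \<and>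
             (postseq \<sigma>, pre t2) \<in> addcl R \<and> (postseq \<sigma>, post t2) \<in> addcl R \<and>
             (m1 - preseq \<sigma>, m2 - pre t2) \<in> addcl R))
        \<or> (\<exists>\<sigma> t1 m m1'. t1 \<in> T \<and> tau_seq tau S T \<sigma> \<and> fire_seq m1 \<sigma> m \<and> firing m t1 m1' \<and>
             postseq \<sigma> = pre t1 \<and> lab t1 = lab t2 \<and> Phi \<sigma> (pre t2) (addcl R) \<and>
             (postseq \<sigma>, pre t2) \<in> addcl R \<and> (post t1, post t2) \<in> addcl R \<and>
             (m1 - preseq \<sigma>, m2 - pre t2) \<in> addcl R)))"

datatype recf = Zero | Succ | Proj nat | Comp recf "recf list" | Prec recf recf | Mn recf

definition arg :: "nat \<Rightarrow> nat list \<Rightarrow> nat" where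
  "arg i xs = (if i < length xs then xs ! i else 0)"

inductive eval :: "recf \<Rightarrow> nat list \<Rightarrow> nat \<Rightarrow> bool" where
  zero: "eval Zero xs 0"
| succ: "eval Succ xs (Suc (arg 0 xs))"
| proj: "eval (Proj i) xs (arg i xs)"
| comp: "length ys = length gs \<Longrightarrow> (\<forall>i<length gs. eval (gs ! i) xs (ys ! i)) \<Longrightarrow>
         eval f ys z \<Longrightarrow> eval (Comp f gs) xs z"
| prec0: "eval g xs z \<Longrightarrow> eval (Prec g h) (0 # xs) z"
| precS: "eval (Prec g h) (n # xs) r \<Longrightarrow> eval h (n # r # xs) z \<Longrightarrow> eval (Prec g h) (Suc n # xs) z"
| mn: "eval f (z # xs) 0 \<Longrightarrow> (\<forall>y<z. \<exists>v. eval f (y # xs) (Suc v)) \<Longrightarrow> eval (Mn f) xs z"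

definition enc_trans :: "nat list \<times> nat \<times> nat list \<Rightarrow> nat" where
  "enc_trans t = (case t of (a, l, b) \<Rightarrow> list_encode [list_encode a, l, list_encode b])"

definition enc_input :: "nat list \<Rightarrow> nat list \<Rightarrow> (nat list \<times> nat \<times> nat list) list \<Rightarrow> (nat \<times> nat) list \<Rightarrow> nat" where
  "enc_input ls la lt lr = list_encode [list_encode ls, list_encode la,
      list_encode (map enc_trans lt), list_encode (map prod_encode lr)]"

definition trans_of :: "nat list \<times> nat \<times> nat list \<Rightarrow> (nat, nat) trans" where
  "trans_of t = (case t of (a, l, b) \<Rightarrow> (mset a, l, mset b))"

end

theory Submission
  imports Defs
begin


definition compn :: "nat \<Rightarrow> (nat list \<Rightarrow> nat) \<Rightarrow> bool" where
  "compn n f \<longleftrightarrow> (\<exists>r. \<forall>xs. length xs = n \<longrightarrow> eval r xs (f xs))"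

lemma compn_Zero: "compn n (\<lambda>xs. 0)"
  unfolding compn_def by (auto intro: eval.zero)

lemma compn_Succ: "compn 1 (\<lambda>xs. Suc (xs ! 0))"
  unfolding compn_def
proof (intro exI[of _ Succ] allI impI)
  fix xs :: "nat list" assume "length xs = 1"
  then show "eval Succ xs (Suc (xs ! 0))" using eval.succ[of xs] by (simp add: arg_def)
qed

lemma compn_Proj: assumes "i < n" shows "compn n (\<lambda>xs. xs ! i)"
  unfolding compn_def
proof (intro exI[of _ "Proj i"] allI impI)
  fix xs :: "nat list" assume "length xs = n"
  with assms show "eval (Proj i) xs (xs ! i)" using eval.proj[of i xs] by (simp add: arg_def)
qed

lemma compn_Comp:
  assumes f: "compn m f" and gs: "\<forall>g\<in>set gs. compn n g" and m: "length gs = m"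
  shows "compn n (\<lambda>xs. f (map (\<lambda>g. g xs) gs))"
proof -
  obtain rf where rf: "\<And>xs. length xs = m \<Longrightarrow> eval rf xs (f xs)" using f unfolding compn_def by blast
  have "\<forall>g\<in>set gs. \<exists>r. \<forall>xs. length xs = n \<longrightarrow> eval r xs (g xs)" using gs unfolding compn_def by blast
  then obtain R where R: "\<And>g xs. g \<in> set gs \<Longrightarrow> length xs = n \<Longrightarrow> eval (R g) xs (g xs)" by metis
  show ?thesis unfolding compn_def
  proof (intro exI[of _ "Comp rf (map R gs)"] allI impI)
    fix xs :: "nat list" assume l: "length xs = n"
    show "eval (Comp rf (map R gs)) xs (f (map (\<lambda>g. g xs) gs))"
      apply (rule eval.comp[where ys="map (\<lambda>g. g xs) gs"])
      using R l rf m by auto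
  qed
qed

lemma compn_Prec:
  assumes g: "compn n g" and h: "compn (Suc (Suc n)) h"
  shows "compn (Suc n) (\<lambda>xs. rec_nat (g (tl xs)) (\<lambda>k r. h (k # r # tl xs)) (hd xs))"
proof -
  obtain rg where rg: "\<And>xs. length xs = n \<Longrightarrow> eval rg xs (g xs)" using g unfolding compn_def by blast
  obtain rh where rh: "\<And>xs. length xs = Suc (Suc n) \<Longrightarrow> eval rh xs (h xs)" using h unfolding compn_def by blast
  have *: "length xs = n \<Longrightarrow> eval (Prec rg rh) (k # xs) (rec_nat (g xs) (\<lambda>k r. h (k # r # xs)) k)" for k xs
    proof (induction k)
    case 0 then show ?case by (auto intro: eval.prec0 rg)
  next
    case (Suc k)
    have IH: "eval (Prec rg rh) (k # xs) (rec_nat (g xs) (\<lambda>k r. h (k # r # xs)) k)" using Suc by simp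
    have "eval rh (k # rec_nat (g xs) (\<lambda>k r. h (k # r # xs)) k # xs) (h (k # rec_nat (g xs) (\<lambda>k r. h (k # r # xs)) k # xs))"
      by (rule rh) (simp add: Suc.prems)
    from eval.precS[OF IH this] show ?case by simp
  qed
  show ?thesis unfolding compn_def
    apply (rule exI[of _ "Prec rg rh"]) apply clarify
    subgoal for xs by (cases xs) (simp_all add: *)
    done
qed

lemma compn_Mn:
  assumes f: "compn (Suc n) f" and ex: "\<And>xs. length xs = n \<Longrightarrow> \<exists>y. f (y # xs) = 0"
  shows "compn n (\<lambda>xs. LEAST y. f (y # xs) = 0)"
proof -
  obtain rf where rf: "\<And>xs. length xs = Suc n \<Longrightarrow> eval rf xs (f xs)" using f unfolding compn_def by blast
  show ?thesis unfolding compn_def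
  proof (intro exI[of _ "Mn rf"] allI impI)
    fix xs :: "nat list" assume l: "length xs = n"
    let ?z = "LEAST y. f (y # xs) = 0"
    obtain y0 where "f (y0 # xs) = 0" using ex[OF l] by blast
    then have z: "f (?z # xs) = 0" by (rule LeastI)
    have lt: "\<forall>y<?z. \<exists>v. eval rf (y # xs) (Suc v)"
    proof (intro allI impI)
      fix y assume "y < ?z"
      then have "f (y # xs) \<noteq> 0" by (rule not_less_Least)
      then obtain v where "f (y # xs) = Suc v" using not0_implies_Suc by blast
      then show "\<exists>v. eval rf (y # xs) (Suc v)" using rf[of "y # xs"] l by auto
    qed
    show "eval (Mn rf) xs ?z"
      apply (rule eval.mn) using rf[of "?z # xs"] z l lt by auto
  qed
qed

lemma compn_const: "compn n (\<lambda>xs. c)"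
proof (induction c)
  case 0 then show ?case by (rule compn_Zero)
next
  case (Suc c)
  have "compn n (\<lambda>xs. (\<lambda>ys. Suc (ys ! 0)) (map (\<lambda>g. g xs) [\<lambda>xs. c]))"
    by (rule compn_Comp[OF compn_Succ]) (use Suc in auto)
  then show ?case by simp
qed


definition comp1 :: "(nat \<Rightarrow> nat) \<Rightarrow> bool" where "comp1 f \<longleftrightarrow> compn 1 (\<lambda>xs. f (xs ! 0))"
definition comp2 :: "(nat \<Rightarrow> nat \<Rightarrow> nat) \<Rightarrow> bool" where "comp2 f \<longleftrightarrow> compn 2 (\<lambda>xs. f (xs ! 0) (xs ! 1))"
definition comp3 :: "(nat \<Rightarrow> nat \<Rightarrow> nat \<Rightarrow> nat) \<Rightarrow> bool" where "comp3 f \<longleftrightarrow> compn 3 (\<lambda>xs. f (xs ! 0) (xs ! 1) (xs ! 2))"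

lemma compn_cong: "compn n f \<Longrightarrow> (\<And>xs. length xs = n \<Longrightarrow> f xs = g xs) \<Longrightarrow> compn n g"
  unfolding compn_def by metis

lemma len1: "length xs = 1 \<longleftrightarrow> (\<exists>a. xs = [a])" by (cases xs) auto
lemma len2: "length xs = 2 \<longleftrightarrow> (\<exists>a b. xs = [a, b])" 
  by (cases xs; cases "tl xs") auto
lemma len3: "length xs = 3 \<longleftrightarrow> (\<exists>a b c. xs = [a, b, c])" 
  by (cases xs; cases "tl xs"; cases "tl (tl xs)") auto

lemma comp1_o1: "comp1 f \<Longrightarrow> comp1 g \<Longrightarrow> comp1 (\<lambda>z. f (g z))"
  unfolding comp1_def
  apply (drule compn_Comp[where gs="[\<lambda>xs. g (xs ! 0)]" and n=1]) by auto

lemma comp1_o2: "comp2 f \<Longrightarrow> comp1 g \<Longrightarrow> comp1 h \<Longrightarrow> comp1 (\<lambda>z. f (g z) (h z))"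
  unfolding comp1_def comp2_def
  apply (drule compn_Comp[where gs="[\<lambda>xs. g (xs ! 0), \<lambda>xs. h (xs ! 0)]" and n=1]) by auto

lemma comp1_o3: "comp3 f \<Longrightarrow> comp1 g \<Longrightarrow> comp1 h \<Longrightarrow> comp1 k \<Longrightarrow> comp1 (\<lambda>z. f (g z) (h z) (k z))"
  unfolding comp1_def comp3_def
  apply (drule compn_Comp[where gs="[\<lambda>xs. g (xs ! 0), \<lambda>xs. h (xs ! 0), \<lambda>xs. k (xs ! 0)]" and n=1]) by auto

lemma comp2_o2: "comp2 f \<Longrightarrow> comp2 g \<Longrightarrow> comp2 h \<Longrightarrow> comp2 (\<lambda>x y. f (g x y) (h x y))"
  unfolding comp2_def
  apply (drule compn_Comp[where gs="[\<lambda>xs. g (xs ! 0) (xs ! 1), \<lambda>xs. h (xs ! 0) (xs ! 1)]" and n=2]) by auto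

lemma comp3_o1: "comp1 f \<Longrightarrow> comp3 g \<Longrightarrow> comp3 (\<lambda>x y w. f (g x y w))"
  unfolding comp1_def comp3_def
  apply (drule compn_Comp[where gs="[\<lambda>xs. g (xs ! 0) (xs ! 1) (xs ! 2)]" and n=3]) by auto

lemma comp3_o2: "comp2 f \<Longrightarrow> comp3 g \<Longrightarrow> comp3 h \<Longrightarrow> comp3 (\<lambda>x y w. f (g x y w) (h x y w))"
  unfolding comp2_def comp3_def
  apply (drule compn_Comp[where gs="[\<lambda>xs. g (xs ! 0) (xs ! 1) (xs ! 2), \<lambda>xs. h (xs ! 0) (xs ! 1) (xs ! 2)]" and n=3]) by auto

lemma comp3_o3: "comp3 f \<Longrightarrow> comp3 g \<Longrightarrow> comp3 h \<Longrightarrow> comp3 k \<Longrightarrow> comp3 (\<lambda>x y w. f (g x y w) (h x y w) (k x y w))"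
  unfolding comp3_def
  apply (drule compn_Comp[where gs="[\<lambda>xs. g (xs ! 0) (xs ! 1) (xs ! 2), \<lambda>xs. h (xs ! 0) (xs ! 1) (xs ! 2), \<lambda>xs. k (xs ! 0) (xs ! 1) (xs ! 2)]" and n=3]) by auto

lemma comp1_const: "comp1 (\<lambda>z. c)" unfolding comp1_def by (rule compn_const)
lemma comp2_const: "comp2 (\<lambda>x y. c)" unfolding comp2_def by (rule compn_const)
lemma comp3_const: "comp3 (\<lambda>x y w. c)" unfolding comp3_def by (rule compn_const)
lemma comp1_id: "comp1 (\<lambda>z. z)" unfolding comp1_def by (rule compn_Proj) simp
lemma comp2_p1: "comp2 (\<lambda>x y. x)" unfolding comp2_def by (rule compn_Proj) simp
lemma comp2_p2: "comp2 (\<lambda>x y. y)" unfolding comp2_def using compn_Proj[of 1 2] by simp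
lemma comp3_p1: "comp3 (\<lambda>x y w. x)" unfolding comp3_def by (rule compn_Proj) simp
lemma comp3_p2: "comp3 (\<lambda>x y w. y)" unfolding comp3_def using compn_Proj[of 1 3] by simp
lemma comp3_p3: "comp3 (\<lambda>x y w. w)" unfolding comp3_def using compn_Proj[of 2 3] by simp
lemma comp1_Suc: "comp1 Suc" unfolding comp1_def by (rule compn_Succ)

lemma comp2_prec: "comp1 g \<Longrightarrow> comp3 h \<Longrightarrow> comp2 (\<lambda>n y. rec_nat (g y) (\<lambda>k r. h k r y) n)"
  unfolding comp1_def comp2_def comp3_def
proof -
  assume a: "compn 1 (\<lambda>xs. g (xs ! 0))" and b: "compn 3 (\<lambda>xs. h (xs ! 0) (xs ! 1) (xs ! 2))"
  have b': "compn (Suc (Suc 1)) (\<lambda>xs. h (xs ! 0) (xs ! 1) (xs ! 2))" using b by (simp add: numeral_3_eq_3)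
  have "compn (Suc 1) (\<lambda>xs. rec_nat (g (tl xs ! 0)) (\<lambda>k r. h ((k # r # tl xs) ! 0) ((k # r # tl xs) ! 1) ((k # r # tl xs) ! 2)) (hd xs))"
    by (rule compn_Prec[OF a b'])
  then show "compn 2 (\<lambda>xs. rec_nat (g (xs ! 1)) (\<lambda>k r. h k r (xs ! 1)) (xs ! 0))"
    apply (simp add: numeral_2_eq_2)
    apply (erule compn_cong) by (auto simp: len2 numeral_2_eq_2[symmetric])
qed

lemma comp1_mn: "comp2 f \<Longrightarrow> (\<And>x. \<exists>y. f y x = 0) \<Longrightarrow> comp1 (\<lambda>x. LEAST y. f y x = 0)"
  unfolding comp1_def comp2_def
proof -
  assume a: "compn 2 (\<lambda>xs. f (xs ! 0) (xs ! 1))" and e: "\<And>x. \<exists>y. f y x = 0"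
  have "compn 1 (\<lambda>xs. LEAST y. f ((y # xs) ! 0) ((y # xs) ! 1) = 0)"
    by (rule compn_Mn) (use a e in \<open>auto simp: len1 numeral_2_eq_2\<close>)
  then show "compn 1 (\<lambda>xs. LEAST y. f y (xs ! 0) = 0)" by simp
qed


abbreviation pf :: "nat \<Rightarrow> nat" where "pf w \<equiv> fst (prod_decode w)"
abbreviation ps :: "nat \<Rightarrow> nat" where "ps w \<equiv> snd (prod_decode w)"
abbreviation pe :: "nat \<Rightarrow> nat \<Rightarrow> nat" where "pe a b \<equiv> prod_encode (a, b)"

lemma comp2_rec:
  assumes g: "comp1 g" and h: "comp3 h"
    and e0: "\<And>y. F 0 y = g y" and eS: "\<And>n y. F (Suc n) y = h n (F n y) y"
  shows "comp2 F"
proof -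
  have "F = (\<lambda>n y. rec_nat (g y) (\<lambda>k r. h k r y) n)"
  proof (intro ext)
    fix n y show "F n y = rec_nat (g y) (\<lambda>k r. h k r y) n" by (induction n) (simp_all add: e0 eS)
  qed
  then show ?thesis using comp2_prec[OF g h] by simp
qed

lemma comp2_add: "comp2 (\<lambda>x y. x + y)"
  by (rule comp2_rec[OF comp1_id comp3_o1[OF comp1_Suc comp3_p2]]) auto

lemma comp1_o2': "comp2 f \<Longrightarrow> comp1 g \<Longrightarrow> comp1 h \<Longrightarrow> comp1 (\<lambda>z. f (g z) (h z))" by (rule comp1_o2)

lemma comp1_pred: "comp1 (\<lambda>n. n - 1)"
proof -
  have "comp2 (\<lambda>n y. n - 1)"
    by (rule comp2_rec[OF comp1_const comp3_p1]) auto
  from comp1_o2[OF this comp1_id comp1_id] show ?thesis by simp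
qed

lemma comp2_sub: "comp2 (\<lambda>x y. x - y)"
proof -
  have "comp2 (\<lambda>n y. y - n)"
    by (rule comp2_rec[OF comp1_id comp3_o1[OF comp1_pred comp3_p2]]) auto
  from comp2_o2[OF this comp2_p2 comp2_p1] show ?thesis by simp
qed

lemma comp2_mult: "comp2 (\<lambda>x y. x * y)"
  by (rule comp2_rec[OF comp1_const comp3_o2[OF comp2_add comp3_p2 comp3_p3]]) auto

lemma comp1_triangle: "comp1 triangle"
proof -
  have "comp2 (\<lambda>n y. triangle n)"
    by (rule comp2_rec[OF comp1_const comp3_o2[OF comp2_add comp3_p2 comp3_o1[OF comp1_Suc comp3_p1]]]) auto
  from comp1_o2[OF this comp1_id comp1_id] show ?thesis by simp
qed

lemma comp2_o1: "comp1 f \<Longrightarrow> comp2 g \<Longrightarrow> comp2 (\<lambda>x y. f (g x y))"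
  unfolding comp1_def comp2_def
  apply (drule compn_Comp[where gs="[\<lambda>xs. g (xs ! 0) (xs ! 1)]" and n=2]) by auto

lemma comp2_pe: "comp2 (\<lambda>a b. pe a b)"
proof -
  have "comp2 (\<lambda>a b. triangle (a + b) + a)"
    by (rule comp2_o2[OF comp2_add comp2_o1[OF comp1_triangle comp2_add] comp2_p1])
  then show ?thesis by (simp add: prod_encode_def)
qed

lemma comp1_eq: "comp1 f \<Longrightarrow> (\<And>z. f z = g z) \<Longrightarrow> comp1 g"
proof -
  assume "comp1 f" "\<And>z. f z = g z"
  then have "f = g" by (intro ext)
  with \<open>comp1 f\<close> show ?thesis by simp
qed

lemma triangle_mono: "k \<le> m \<Longrightarrow> triangle k \<le> triangle m"
  by (induction m) (auto simp: le_Suc_eq)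

definition kk :: "nat \<Rightarrow> nat" where "kk n = (LEAST k. Suc n - triangle (Suc k) = 0)"

lemma kk_eq: "prod_decode n = (a, b) \<Longrightarrow> kk n = a + b"
proof -
  assume d: "prod_decode n = (a, b)"
  have n: "n = triangle (a + b) + a" using prod_decode_inverse[of n] d by (simp add: prod_encode_def)
  show ?thesis unfolding kk_def
  proof (rule Least_equality)
    show "Suc n - triangle (Suc (a + b)) = 0" using n by simp
  next
    fix y assume "Suc n - triangle (Suc y) = 0"
    then have "n < triangle (Suc y)" by simp
    show "a + b \<le> y"
    proof (rule ccontr)
      assume "\<not> a + b \<le> y"
      then have "Suc y \<le> a + b" by simp
      then have "triangle (Suc y) \<le> triangle (a + b)" by (rule triangle_mono)
      with \<open>n < triangle (Suc y)\<close> n show False by simp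
    qed
  qed
qed

lemma pf_kk: "pf n = n - triangle (kk n)" and ps_kk: "ps n = kk n - (n - triangle (kk n))"
proof -
  obtain a b where d: "prod_decode n = (a, b)" by fastforce
  have n: "n = triangle (a + b) + a" using prod_decode_inverse[of n] d by (simp add: prod_encode_def)
  show "pf n = n - triangle (kk n)" using kk_eq[OF d] d n by simp
  show "ps n = kk n - (n - triangle (kk n))" using kk_eq[OF d] d n by simp
qed

lemma comp1_kk: "comp1 kk"
  unfolding kk_def
proof (rule comp1_mn)
  show "comp2 (\<lambda>k n. Suc n - triangle (Suc k))"
    by (rule comp2_o2[OF comp2_sub comp2_o1[OF comp1_Suc comp2_p2] comp2_o1[OF comp1_triangle comp2_o1[OF comp1_Suc comp2_p1]]])
  fix n show "\<exists>y. Suc n - triangle (Suc y) = 0"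
    by (rule exI[of _ n]) (induction n, auto)
qed

lemma comp1_pf: "comp1 pf"
  by (rule comp1_eq[OF comp1_o2[OF comp2_sub comp1_id comp1_o1[OF comp1_triangle comp1_kk]]]) (simp add: pf_kk)

lemma comp1_ps: "comp1 ps"
  by (rule comp1_eq[OF comp1_o2[OF comp2_sub comp1_kk comp1_o2[OF comp2_sub comp1_id comp1_o1[OF comp1_triangle comp1_kk]]]]) (simp add: ps_kk)

definition comp1b :: "(nat \<Rightarrow> bool) \<Rightarrow> bool" where "comp1b P \<longleftrightarrow> comp1 (\<lambda>z. if P z then 1 else 0)"

lemma C_const: "comp1 (\<lambda>z. c)" by (rule comp1_const)
lemma C_id: "comp1 (\<lambda>z. z)" by (rule comp1_id)
lemma C_Suc: "comp1 F \<Longrightarrow> comp1 (\<lambda>z. Suc (F z))" by (rule comp1_o1[OF comp1_Suc])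
lemma C_add: "comp1 F \<Longrightarrow> comp1 G \<Longrightarrow> comp1 (\<lambda>z. F z + G z)" by (rule comp1_o2[OF comp2_add])
lemma C_sub: "comp1 F \<Longrightarrow> comp1 G \<Longrightarrow> comp1 (\<lambda>z. F z - G z)" by (rule comp1_o2[OF comp2_sub])
lemma C_mult: "comp1 F \<Longrightarrow> comp1 G \<Longrightarrow> comp1 (\<lambda>z. F z * G z)" by (rule comp1_o2[OF comp2_mult])
lemma C_pe: "comp1 F \<Longrightarrow> comp1 G \<Longrightarrow> comp1 (\<lambda>z. pe (F z) (G z))" by (rule comp1_o2[OF comp2_pe])
lemma C_pf: "comp1 F \<Longrightarrow> comp1 (\<lambda>z. pf (F z))" by (rule comp1_o1[OF comp1_pf])
lemma C_ps: "comp1 F \<Longrightarrow> comp1 (\<lambda>z. ps (F z))" by (rule comp1_o1[OF comp1_ps])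

lemma C_if: assumes "comp1b P" "comp1 F" "comp1 G" shows "comp1 (\<lambda>z. if P z then F z else G z)"
proof -
  have "comp1 (\<lambda>z. (if P z then 1 else 0) * F z + (1 - (if P z then 1 else 0)) * G z)"
    using assms unfolding comp1b_def by (intro C_add C_mult C_sub C_const)
  then show ?thesis by (rule comp1_eq) auto
qed

lemma B_eq: assumes "comp1 F" "comp1 G" shows "comp1b (\<lambda>z. F z = G z)"
proof -
  have "comp1 (\<lambda>z. 1 - ((F z - G z) + (G z - F z)))" using assms by (intro C_sub C_add C_const)
  then show ?thesis unfolding comp1b_def by (rule comp1_eq) auto
qed

lemma B_less: assumes "comp1 F" "comp1 G" shows "comp1b (\<lambda>z. F z < G z)"
proof -
  have "comp1 (\<lambda>z. 1 - (1 - (G z - F z)))" using assms by (intro C_sub C_add C_const)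
  then show ?thesis unfolding comp1b_def by (rule comp1_eq) auto
qed

lemma B_le: assumes "comp1 F" "comp1 G" shows "comp1b (\<lambda>z. F z \<le> G z)"
proof -
  have "comp1 (\<lambda>z. 1 - (1 - (Suc (G z) - F z)))" using assms by (intro C_sub C_Suc C_const)
  then show ?thesis unfolding comp1b_def by (rule comp1_eq) auto
qed

lemma B_not: assumes "comp1b P" shows "comp1b (\<lambda>z. \<not> P z)"
proof -
  have "comp1 (\<lambda>z. 1 - (if P z then 1 else 0))" using assms unfolding comp1b_def by (intro C_sub C_const)
  then show ?thesis unfolding comp1b_def by (rule comp1_eq) auto
qed

lemma B_and: assumes "comp1b P" "comp1b Q" shows "comp1b (\<lambda>z. P z \<and> Q z)"
proof -
  have "comp1 (\<lambda>z. (if P z then 1 else 0) * (if Q z then 1 else 0))" using assms unfolding comp1b_def by (intro C_mult)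
  then show ?thesis unfolding comp1b_def by (rule comp1_eq) auto
qed

lemma B_or: assumes "comp1b P" "comp1b Q" shows "comp1b (\<lambda>z. P z \<or> Q z)"
proof -
  have "comp1 (\<lambda>z. 1 - (1 - (if P z then 1 else 0)) * (1 - (if Q z then 1 else 0)))" using assms unfolding comp1b_def by (intro C_mult C_sub C_const)
  then show ?thesis unfolding comp1b_def by (rule comp1_eq) auto
qed

lemma B_imp: assumes "comp1b P" "comp1b Q" shows "comp1b (\<lambda>z. P z \<longrightarrow> Q z)"
proof -
  have "comp1 (\<lambda>z. 1 - (if P z then 1 else 0) * (1 - (if Q z then 1 else 0)))" using assms unfolding comp1b_def by (intro C_mult C_sub C_const)
  then show ?thesis unfolding comp1b_def by (rule comp1_eq) auto
qed

lemma B_const: "comp1b (\<lambda>z. b)"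
  unfolding comp1b_def by (rule C_const)

lemma C_rec:
  assumes A: "comp1 A" and H: "comp1 (\<lambda>w. H (pf w) (pf (ps w)) (ps (ps w)))" and N: "comp1 N"
  shows "comp1 (\<lambda>z. rec_nat (A z) (\<lambda>k r. H k r z) (N z))"
proof -
  have h3: "comp3 (\<lambda>k r y. (\<lambda>w. H (pf w) (pf (ps w)) (ps (ps w))) (pe k (pe r y)))"
    by (rule comp3_o1[OF H comp3_o2[OF comp2_pe comp3_p1 comp3_o2[OF comp2_pe comp3_p2 comp3_p3]]])
  have "comp2 (\<lambda>n y. rec_nat (A y) (\<lambda>k r. (\<lambda>w. H (pf w) (pf (ps w)) (ps (ps w))) (pe k (pe r y))) n)"
    by (rule comp2_prec[OF A h3])
  from comp1_o2[OF this N comp1_id] show ?thesis by simp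
qed


lemma C_app2: assumes "comp1 (\<lambda>w. F (pf w) (ps w))" "comp1 X" "comp1 Y"
  shows "comp1 (\<lambda>z. F (X z) (Y z))"
proof -
  have "comp1 (\<lambda>z. (\<lambda>w. F (pf w) (ps w)) (pe (X z) (Y z)))"
    by (rule comp1_o1[OF assms(1)]) (intro C_pe assms)
  then show ?thesis by simp
qed

lemma C_app3: assumes "comp1 (\<lambda>w. F (pf w) (pf (ps w)) (ps (ps w)))" "comp1 X" "comp1 Y" "comp1 Z"
  shows "comp1 (\<lambda>z. F (X z) (Y z) (Z z))"
proof -
  have "comp1 (\<lambda>z. (\<lambda>w. F (pf w) (pf (ps w)) (ps (ps w))) (pe (X z) (pe (Y z) (Z z))))"
    by (rule comp1_o1[OF assms(1)]) (intro C_pe assms)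
  then show ?thesis by simp
qed

lemma B_app2: assumes "comp1b (\<lambda>w. P (pf w) (ps w))" "comp1 X" "comp1 Y"
  shows "comp1b (\<lambda>z. P (X z) (Y z))"
  using assms unfolding comp1b_def by (rule C_app2[where F="\<lambda>a b. if P a b then 1 else 0"])

lemma length_list_decode_le: "length (list_decode c) \<le> c"
proof (induction c rule: list_decode.induct)
  case 1 then show ?case by simp
next
  case (2 n)
  obtain x y where d: "prod_decode n = (x, y)" by fastforce
  have "y \<le> n" by (metis d prod_decode_inverse le_prod_encode_2)
  with 2 d show ?case by simp
qed

lemma list_decode_Suc': "c \<noteq> 0 \<Longrightarrow> list_decode c = pf (c - 1) # list_decode (ps (c - 1))"
  by (cases c) (auto split: prod.split)

definition fstep :: "(nat \<Rightarrow> nat \<Rightarrow> nat \<Rightarrow> nat) \<Rightarrow> nat \<Rightarrow> nat \<Rightarrow> nat" where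
  "fstep F z s = (if pf s = 0 then s else pe (ps (pf s - 1)) (F (pf (pf s - 1)) (ps s) z))"

lemma fstep_iter0: "(fstep F z ^^ n) (pe 0 a) = pe 0 a"
  by (induction n) (auto simp: fstep_def)

lemma fstep_iter: "length (list_decode c) \<le> n \<Longrightarrow>
   (fstep F z ^^ n) (pe c a) = pe 0 (foldl (\<lambda>acc y. F y acc z) a (list_decode c))"
proof (induction n arbitrary: c a)
  case 0 then show ?case by (cases c) (auto split: prod.splits)
next
  case (Suc n)
  show ?case
  proof (cases "c = 0")
    case True then show ?thesis using fstep_iter0[where n="Suc n" and a=a and F=F and z=z] by simp
  next
    case False
    have st: "fstep F z (pe c a) = pe (ps (c - 1)) (F (pf (c - 1)) a z)" using False by (simp add: fstep_def)
    have "length (list_decode (ps (c - 1))) \<le> n" using Suc.prems list_decode_Suc'[OF False] by simp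
    have "(fstep F z ^^ Suc n) (pe c a) = (fstep F z ^^ n) (fstep F z (pe c a))"
      by (simp only: funpow_Suc_right comp_def)
    then show ?thesis using Suc.IH[OF \<open>length (list_decode (ps (c - 1))) \<le> n\<close>] st list_decode_Suc'[OF False] by simp
  qed
qed

lemma rec_nat_funpow: "rec_nat s (\<lambda>k r. f r) n = (f ^^ n) s"
  by (induction n) auto

lemma C_fold:
  assumes A: "comp1 A" and F: "comp1 (\<lambda>w. F (pf w) (pf (ps w)) (ps (ps w)))" and L: "comp1 L"
  shows "comp1 (\<lambda>z. foldl (\<lambda>acc y. F y acc z) (A z) (list_decode (L z)))"
proof -
  have st: "comp1 (\<lambda>w. fstep F (ps (ps w)) (pf (ps w)))"
    unfolding fstep_def
    by (intro C_if B_eq C_pf C_ps C_id C_const C_pe C_sub C_app3[OF F])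
  have "comp1 (\<lambda>z. rec_nat (pe (L z) (A z)) (\<lambda>k r. fstep F z r) (L z))"
    by (rule C_rec[OF C_pe[OF L A] _ L]) (rule st)
  then have "comp1 (\<lambda>z. ps (rec_nat (pe (L z) (A z)) (\<lambda>k r. fstep F z r) (L z)))" by (rule C_ps)
  then show ?thesis
    by (rule comp1_eq) (simp add: rec_nat_funpow fstep_iter[OF length_list_decode_le])
qed

lemma foldl_enc: "foldl (\<lambda>acc y. list_encode (g y (list_decode acc))) (list_encode a) xs
   = list_encode (foldl (\<lambda>acc y. g y acc) a xs)"
  by (induction xs arbitrary: a) auto

lemma L_cons: assumes "comp1 F" "comp1 G" shows "comp1 (\<lambda>z. list_encode (F z # list_decode (G z)))"
proof -
  have "comp1 (\<lambda>z. Suc (pe (F z) (G z)))" by (intro C_Suc C_pe assms)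
  then show ?thesis by (rule comp1_eq) simp
qed

lemma C_hd: assumes "comp1 L" shows "comp1 (\<lambda>z. hd (list_decode (L z)))"
proof -
  have "comp1 (\<lambda>z. if L z = 0 then hd [] else pf (L z - 1))" by (intro C_if B_eq C_const C_pf C_sub assms)
  then show ?thesis by (rule comp1_eq) (auto simp: list_decode_Suc')
qed

lemma L_tl: assumes "comp1 L" shows "comp1 (\<lambda>z. list_encode (tl (list_decode (L z))))"
proof -
  have "comp1 (\<lambda>z. if L z = 0 then 0 else ps (L z - 1))" by (intro C_if B_eq C_const C_ps C_sub assms)
  then show ?thesis by (rule comp1_eq) (auto simp: list_decode_Suc')
qed

lemma foldl_rev: "foldl (\<lambda>acc y. y # acc) a xs = rev xs @ a"
  by (induction xs arbitrary: a) auto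

lemma L_rev: assumes "comp1 L" shows "comp1 (\<lambda>z. list_encode (rev (list_decode (L z))))"
proof -
  have "comp1 (\<lambda>z. foldl (\<lambda>acc y. (\<lambda>y acc z. list_encode (y # list_decode acc)) y acc z) (list_encode []) (list_decode (L z)))"
    by (intro C_fold C_const assms L_cons C_pf C_ps C_id)
  moreover have "foldl (\<lambda>acc y. list_encode (y # list_decode acc)) (list_encode []) xs = list_encode (rev xs)" for xs
    using foldl_enc[where g="\<lambda>y acc. y # acc" and a="[]" and xs=xs] foldl_rev[of "[]" xs] by simp
  ultimately show ?thesis by simp
qed


lemma comp1b_eq: "comp1b P \<Longrightarrow> (\<And>z. P z = Q z) \<Longrightarrow> comp1b Q"
proof -
  assume "comp1b P" "\<And>z. P z = Q z"
  then have "P = Q" by (intro ext)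
  with \<open>comp1b P\<close> show ?thesis by simp
qed

lemma foldl_cons_enc: "foldl (\<lambda>acc y. list_encode (f y # list_decode acc)) c xs = list_encode (rev (map f xs) @ list_decode c)"
  by (induction xs arbitrary: c) auto

lemma L_map: assumes F: "comp1 (\<lambda>w. F (pf w) (ps w))" and L: "comp1 L"
  shows "comp1 (\<lambda>z. list_encode (map (\<lambda>y. F y z) (list_decode (L z))))"
proof -
  have "comp1 (\<lambda>z. list_encode (rev (list_decode (foldl (\<lambda>acc y. (\<lambda>y acc z. list_encode (F y z # list_decode acc)) y acc z) (list_encode []) (list_decode (L z))))))"
    by (intro L_rev C_fold C_const L L_cons C_app2[OF F] C_pf C_ps C_id)
  then show ?thesis by (rule comp1_eq) (simp only: foldl_cons_enc list_encode_inverse rev_rev_ident append_Nil2)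
qed

lemma foldl_filter_enc: "foldl (\<lambda>acc y. if p y then list_encode (y # list_decode acc) else acc) c xs = list_encode (rev (filter p xs) @ list_decode c)"
  by (induction xs arbitrary: c) auto

lemma L_filter: assumes P: "comp1b (\<lambda>w. P (pf w) (ps w))" and L: "comp1 L"
  shows "comp1 (\<lambda>z. list_encode (filter (\<lambda>y. P y z) (list_decode (L z))))"
proof -
  have "comp1 (\<lambda>z. list_encode (rev (list_decode (foldl (\<lambda>acc y. (\<lambda>y acc z. if P y z then list_encode (y # list_decode acc) else acc) y acc z) (list_encode []) (list_decode (L z))))))"
    by (intro L_rev C_fold C_const L L_cons C_if B_app2[OF P] C_pf C_ps C_id)
  then show ?thesis by (rule comp1_eq) (simp only: foldl_filter_enc list_encode_inverse rev_rev_ident append_Nil2)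
qed

lemma L_append: assumes F: "comp1 F" and G: "comp1 G"
  shows "comp1 (\<lambda>z. list_encode (list_decode (F z) @ list_decode (G z)))"
proof -
  have "comp1 (\<lambda>z. foldl (\<lambda>acc y. (\<lambda>y acc z. list_encode (y # list_decode acc)) y acc z) (G z) (list_decode (list_encode (rev (list_decode (F z))))))"
    by (intro C_fold G L_rev F L_cons C_pf C_ps C_id)
  moreover have "foldl (\<lambda>acc y. list_encode (y # list_decode acc)) c xs = list_encode (rev xs @ list_decode c)" for c xs
    using foldl_cons_enc[of "\<lambda>y. y" c xs] by simp
  ultimately show ?thesis by simp
qed

lemma foldl_app_enc: "foldl (\<lambda>acc c. list_encode (list_decode acc @ g c)) d xs = list_encode (list_decode d @ concat (map g xs))"
  by (induction xs arbitrary: d) auto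

lemma L_concat: assumes L: "comp1 L"
  shows "comp1 (\<lambda>z. list_encode (concat (map list_decode (list_decode (L z)))))"
proof -
  have "comp1 (\<lambda>z. foldl (\<lambda>acc y. (\<lambda>y acc z. list_encode (list_decode acc @ list_decode y)) y acc z) (list_encode []) (list_decode (L z)))"
    by (intro C_fold C_const L L_append C_pf C_ps C_id)
  then show ?thesis by (rule comp1_eq) (simp add: foldl_app_enc)
qed

lemma foldl_len: "foldl (\<lambda>a y. Suc a) a xs = a + length xs"
  by (induction xs arbitrary: a) auto

lemma C_length: assumes L: "comp1 L" shows "comp1 (\<lambda>z. length (list_decode (L z)))"
proof -
  have "comp1 (\<lambda>z. foldl (\<lambda>acc y. (\<lambda>y acc z. Suc acc) y acc z) 0 (list_decode (L z)))"
    by (intro C_fold C_const L C_Suc C_pf C_ps C_id)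
  then show ?thesis by (rule comp1_eq) (simp add: foldl_len)
qed

lemma foldl_all: "foldl (\<lambda>acc y. if p y then acc else 0) a xs = (if \<forall>y\<in>set xs. p y then a else 0)"
  by (induction xs arbitrary: a) auto

lemma B_all: assumes P: "comp1b (\<lambda>w. P (pf w) (ps w))" and L: "comp1 L"
  shows "comp1b (\<lambda>z. \<forall>y\<in>set (list_decode (L z)). P y z)"
proof -
  have "comp1 (\<lambda>z. foldl (\<lambda>acc y. (\<lambda>y acc z. if P y z then acc else 0) y acc z) 1 (list_decode (L z)))"
    by (intro C_fold C_const L C_if B_app2[OF P] C_pf C_ps C_id)
  then show ?thesis unfolding comp1b_def by (rule comp1_eq) (simp add: foldl_all)
qed

lemma B_ex: assumes P: "comp1b (\<lambda>w. P (pf w) (ps w))" and L: "comp1 L"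
  shows "comp1b (\<lambda>z. \<exists>y\<in>set (list_decode (L z)). P y z)"
proof -
  have "comp1b (\<lambda>z. \<not> (\<forall>y\<in>set (list_decode (L z)). \<not> P y z))"
    by (intro B_not B_all L P)
  then show ?thesis by (rule comp1b_eq) blast
qed

lemma foldl_count: "foldl (\<lambda>a y. if y = x then Suc a else a) a xs = a + count_list xs x"
  by (induction xs arbitrary: a) auto

lemma C_count: assumes L: "comp1 L" and X: "comp1 X"
  shows "comp1 (\<lambda>z. count_list (list_decode (L z)) (X z))"
proof -
  have "comp1 (\<lambda>z. foldl (\<lambda>acc y. (\<lambda>y acc z. if y = X z then Suc acc else acc) y acc z) 0 (list_decode (L z)))"
    by (intro C_fold C_const L C_if B_eq comp1_o1[OF X] C_Suc C_pf C_ps C_id)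
  then show ?thesis by (rule comp1_eq) (simp add: foldl_count)
qed

definition rmstep :: "nat \<Rightarrow> nat \<Rightarrow> nat \<Rightarrow> nat" where
  "rmstep x s y = (if pf s = 1 \<and> y = x then pe 0 (ps s) else pe (pf s) (list_encode (y # list_decode (ps s))))"

lemma foldl_rm0: "foldl (rmstep x) (pe 0 c) xs = pe 0 (list_encode (rev xs @ list_decode c))"
  by (induction xs arbitrary: c) (auto simp: rmstep_def)

lemma foldl_rm1: "foldl (rmstep x) (pe 1 c) xs = pe (if x \<in> set xs then 0 else 1) (list_encode (rev (remove1 x xs) @ list_decode c))"
  by (induction xs arbitrary: c) (auto simp: rmstep_def foldl_rm0)

lemma foldl_rm1': "foldl (rmstep x) (pe (Suc 0) c) xs = pe (if x \<in> set xs then 0 else 1) (list_encode (rev (remove1 x xs) @ list_decode c))"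
  using foldl_rm1 by simp

lemma L_remove1: assumes L: "comp1 L" and X: "comp1 X"
  shows "comp1 (\<lambda>z. list_encode (remove1 (X z) (list_decode (L z))))"
proof -
  have "comp1 (\<lambda>z. list_encode (rev (list_decode (ps (foldl (\<lambda>acc y. (\<lambda>y acc z. rmstep (X z) acc y) y acc z) (pe 1 (list_encode [])) (list_decode (L z)))))))"
    unfolding rmstep_def
    by (intro L_rev C_ps C_fold C_pe C_const L C_if B_and B_eq comp1_o1[OF X] L_cons C_pf C_ps C_id)
  then show ?thesis by (rule comp1_eq) (simp add: foldl_rm1 foldl_rm1')
qed

fun chainL :: "nat list \<Rightarrow> bool" where
  "chainL [] = True"
| "chainL [x] = True"
| "chainL (x # y # xs) = (ps x = pf y \<and> chainL (y # xs))"

definition chstep :: "nat \<Rightarrow> nat \<Rightarrow> nat" where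
  "chstep s y = pe (if ps s = 0 \<or> ps (ps s - 1) = pf y then pf s else 0) (Suc y)"

lemma foldl_ch: "foldl chstep (pe a (Suc p)) xs = pe (if chainL (p # xs) then a else 0) (Suc (last (p # xs)))"
  by (induction xs arbitrary: a p) (auto simp: chstep_def)

lemma B_chain: assumes L: "comp1 L" shows "comp1b (\<lambda>z. chainL (list_decode (L z)))"
proof -
  have c: "comp1 (\<lambda>z. pf (foldl (\<lambda>acc y. (\<lambda>y acc z. chstep acc y) y acc z) (pe 1 0) (list_decode (L z))))"
    unfolding chstep_def
    by (intro C_pf C_fold C_pe C_const L C_if B_or B_eq C_ps C_sub C_pf C_Suc C_id)
  have e: "foldl chstep (pe 1 0) xs = pe (if chainL xs then 1 else 0) (case xs of [] \<Rightarrow> 0 | _ \<Rightarrow> Suc (last xs))" for xs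
  proof (cases xs)
    case Nil then show ?thesis by simp
  next
    case (Cons y ys)
    have "foldl chstep (pe 1 0) xs = foldl chstep (chstep (pe 1 0) y) ys" using Cons by simp
    also have "chstep (pe 1 0) y = pe 1 (Suc y)" by (simp add: chstep_def)
    finally show ?thesis using foldl_ch[of 1 y ys] Cons by simp
  qed
  show ?thesis unfolding comp1b_def by (rule comp1_eq[OF c]) (simp only: e, simp)
qed

lemma L_nlists: assumes N: "comp1 N" and L: "comp1 L"
  shows "comp1 (\<lambda>z. list_encode (map list_encode (List.n_lists (N z) (list_decode (L z)))))"
proof -
  have "comp1 (\<lambda>z. rec_nat (list_encode [list_encode []]) (\<lambda>k r. (\<lambda>k r z. list_encode (concat (map list_decode (list_decode (list_encode (map (\<lambda>c. list_encode (map (\<lambda>y. list_encode (y # list_decode c)) (list_decode (L z)))) (list_decode r))))))) k r z) (N z))"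
    by (intro C_rec C_const N L_concat L_map L_cons comp1_o1[OF L] C_pf C_ps C_id)
  moreover have "rec_nat (list_encode [list_encode []]) (\<lambda>k r. list_encode (concat (map list_decode (list_decode (list_encode (map (\<lambda>c. list_encode (map (\<lambda>y. list_encode (y # list_decode c)) xs)) (list_decode r))))))) n
     = list_encode (map list_encode (List.n_lists n xs))" for n xs
    by (induction n) (simp_all add: map_concat o_def)
  ultimately show ?thesis by simp
qed

lemma L_upt: assumes N: "comp1 N" shows "comp1 (\<lambda>z. list_encode [0..<N z])"
proof -
  have "comp1 (\<lambda>z. rec_nat (list_encode []) (\<lambda>k r. (\<lambda>k r z. list_encode (list_decode r @ list_decode (list_encode (k # list_decode (list_encode []))))) k r z) (N z))"
    by (intro C_rec C_const N L_append L_cons C_pf C_ps C_id)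
  moreover have "rec_nat (list_encode []) (\<lambda>k r. list_encode (list_decode r @ list_decode (list_encode (k # list_decode (list_encode []))))) n = list_encode [0..<n]" for n
    by (induction n) simp_all
  ultimately show ?thesis by simp
qed


lemma firing_frame: assumes "firing m t m'" shows "firing (m + r) t (m' + r)"
proof -
  have p: "pre t \<subseteq># m" and m': "m' = m - pre t + post t" using assms by (auto simp: firing_def)
  have "pre t \<subseteq># m + r" using p by (meson mset_subset_eq_add_left subset_mset.order_trans)
  moreover have "m' + r = m + r - pre t + post t"
  proof (rule multiset_eqI)
    fix a
    have "count (pre t) a \<le> count m a" using p by (simp add: subseteq_mset_def)
    then show "count (m' + r) a = count (m + r - pre t + post t) a" unfolding m' by simp
  qed
  ultimately show ?thesis by (simp add: firing_def)
qed

lemma fire_seq_frame: "fire_seq m \<sigma> m' \<Longrightarrow> fire_seq (m + r) \<sigma> (m' + r)"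
  by (induction \<sigma> arbitrary: m) (auto dest: firing_frame)

lemma fire_seq_det: "fire_seq m \<sigma> m1 \<Longrightarrow> fire_seq m \<sigma> m2 \<Longrightarrow> m1 = m2"
  by (induction \<sigma> arbitrary: m) (auto simp: firing_def)

lemma fire_seq_append: "fire_seq m (xs @ ys) m'' \<longleftrightarrow> (\<exists>m'. fire_seq m xs m' \<and> fire_seq m' ys m'')"
  by (induction xs arbitrary: m) auto

lemma preseq_sub: "fire_seq m \<sigma> m' \<Longrightarrow> preseq \<sigma> \<subseteq># m"
proof (induction \<sigma> arbitrary: m)
  case Nil then show ?case by simp
next
  case (Cons t \<sigma>)
  then obtain m1 where f: "firing m t m1" and r: "fire_seq m1 \<sigma> m'" by auto
  have IH: "preseq \<sigma> \<subseteq># m1" using Cons.IH r by blast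
  have m1: "m1 = (m - pre t) + post t" and p: "pre t \<subseteq># m" using f by (auto simp: firing_def)
  show ?case unfolding subseteq_mset_def
  proof
    fix a
    have "count (preseq \<sigma>) a \<le> count m a - count (pre t) a + count (post t) a"
      using IH unfolding m1 subseteq_mset_def by simp
    moreover have "count (pre t) a \<le> count m a" using p unfolding subseteq_mset_def by simp
    ultimately show "count (preseq (t # \<sigma>)) a \<le> count m a" by simp
  qed
qed

lemma fire_preseq: "fire_seq (preseq \<sigma>) \<sigma> (postseq \<sigma>)"
proof (induction \<sigma>)
  case Nil then show ?case by simp
next
  case (Cons t \<sigma>)
  let ?P = "preseq \<sigma>"
  have f: "firing (pre t + (?P - post t)) t ((?P - post t) + post t)" by (simp add: firing_def)
  have eq: "(?P - post t) + post t = ?P + (post t - ?P)"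
    by (rule multiset_eqI) simp
  have "fire_seq (?P + (post t - ?P)) \<sigma> (postseq \<sigma> + (post t - ?P))"
    by (rule fire_seq_frame[OF Cons.IH])
  with f eq show ?case by auto
qed

lemma preseq_append: "preseq (xs @ ys) = preseq xs + (preseq ys - postseq xs)"
proof (induction xs)
  case Nil then show ?case by simp
next
  case (Cons t xs)
  show ?case
  proof (rule multiset_eqI)
    fix a
    have "count (preseq (xs @ ys)) a = count (preseq xs) a + (count (preseq ys) a - count (postseq xs) a)"
      using Cons by simp
    then show "count (preseq ((t # xs) @ ys)) a = count (preseq (t # xs) + (preseq ys - postseq (t # xs))) a"
      by simp
  qed
qed

lemma postseq_append: "postseq (xs @ ys) = postseq ys + (postseq xs - preseq ys)"
proof (induction xs)
  case Nil then show ?case by simp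
next
  case (Cons t xs)
  show ?case
  proof (rule multiset_eqI)
    fix a
    have "count (postseq (xs @ ys)) a = count (postseq ys) a + (count (postseq xs) a - count (preseq ys) a)"
      using Cons by simp
    then show "count (postseq ((t # xs) @ ys)) a = count (postseq ys + (postseq (t # xs) - preseq ys)) a"
      by (simp add: preseq_append)
  qed
qed

lemma addcl_empty_left: "({#}, x) \<in> addcl R \<longleftrightarrow> x = {#}"
  by (auto elim: addcl.cases intro: addcl.empty)

lemma addcl_size: "(x, y) \<in> addcl R \<Longrightarrow> size x = size y"
  by (induction rule: addcl.induct) auto

lemma addcl_conv: "(x, y) \<in> addcl (R\<inverse>) \<longleftrightarrow> (y, x) \<in> addcl R"
proof
  show "(x, y) \<in> addcl (R\<inverse>) \<Longrightarrow> (y, x) \<in> addcl R"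
    by (induction rule: addcl.induct) (auto intro: addcl.intros)
  show "(y, x) \<in> addcl R \<Longrightarrow> (x, y) \<in> addcl (R\<inverse>)"
    by (induction rule: addcl.induct) (auto intro: addcl.intros)
qed

lemma addcl_set: "(x, y) \<in> addcl R \<Longrightarrow> R \<subseteq> S \<times> S \<Longrightarrow> set_mset x \<subseteq> S \<and> set_mset y \<subseteq> S"
  by (induction rule: addcl.induct) auto

lemma addcl_decomp: "(m1, m2) \<in> addcl R \<Longrightarrow> a \<subseteq># m1 \<Longrightarrow>
   \<exists>p r. (a, p) \<in> addcl R \<and> (m1 - a, r) \<in> addcl R \<and> m2 = p + r"
proof (induction arbitrary: a rule: addcl.induct)
  case empty then show ?case by (auto intro: addcl.empty)
next
  case (add s1 s2 m1 m2)
  have sub: "\<And>x. count a x \<le> count (add_mset s1 m1) x" using add.prems by (simp add: subseteq_mset_def)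
  show ?case
  proof (cases "s1 \<in># a")
    case True
    have ca: "count a s1 \<ge> 1" using True by (simp add: Suc_le_eq)
    have "a - {#s1#} \<subseteq># m1" unfolding subseteq_mset_def
    proof
      fix x show "count (a - {#s1#}) x \<le> count m1 x" using sub[of x] by (cases "x = s1") auto
    qed
    then obtain p r where pr: "(a - {#s1#}, p) \<in> addcl R" "(m1 - (a - {#s1#}), r) \<in> addcl R" "m2 = p + r"
      using add.IH by blast
    have e1: "add_mset s1 (a - {#s1#}) = a" using True by simp
    have e2: "add_mset s1 m1 - a = m1 - (a - {#s1#})"
    proof (rule multiset_eqI)
      fix x show "count (add_mset s1 m1 - a) x = count (m1 - (a - {#s1#})) x"
        using ca by (cases "x = s1") auto
    qed
    have "(a, add_mset s2 p) \<in> addcl R" using addcl.add[OF add.hyps(1) pr(1)] e1 by simp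
    moreover have "add_mset s2 m2 = add_mset s2 p + r" using pr(3) by simp
    ultimately show ?thesis using pr(2) unfolding e2 by blast
  next
    case False
    then have ca: "count a s1 = 0" by (simp add: not_in_iff)
    have "a \<subseteq># m1" unfolding subseteq_mset_def
    proof
      fix x show "count a x \<le> count m1 x" using sub[of x] ca by (cases "x = s1") auto
    qed
    then obtain p r where pr: "(a, p) \<in> addcl R" "(m1 - a, r) \<in> addcl R" "m2 = p + r"
      using add.IH by blast
    have e2: "add_mset s1 m1 - a = add_mset s1 (m1 - a)"
    proof (rule multiset_eqI)
      fix x show "count (add_mset s1 m1 - a) x = count (add_mset s1 (m1 - a)) x"
        using ca by (cases "x = s1") auto
    qed
    have "(add_mset s1 m1 - a, add_mset s2 r) \<in> addcl R" using addcl.add[OF add.hyps(1) pr(2)] e2 by simp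
    moreover have "add_mset s2 m2 = p + add_mset s2 r" using pr(3) by simp
    ultimately show ?thesis using pr(1) by blast
  qed
qed

lemma addcl_list: "(x, y) \<in> addcl R \<longleftrightarrow> (\<exists>qs. set qs \<subseteq> R \<and> mset (map fst qs) = x \<and> mset (map snd qs) = y)"
proof
  show "(x, y) \<in> addcl R \<Longrightarrow> \<exists>qs. set qs \<subseteq> R \<and> mset (map fst qs) = x \<and> mset (map snd qs) = y"
  proof (induction rule: addcl.induct)
    case empty then show ?case by (intro exI[of _ "[]"]) auto
  next
    case (add s1 s2 m1 m2)
    then obtain qs where "set qs \<subseteq> R" "mset (map fst qs) = m1" "mset (map snd qs) = m2" by blast
    then show ?case using add.hyps by (intro exI[of _ "(s1, s2) # qs"]) auto
  qed
next
  assume "\<exists>qs. set qs \<subseteq> R \<and> mset (map fst qs) = x \<and> mset (map snd qs) = y"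
  then obtain qs where "set qs \<subseteq> R" "mset (map fst qs) = x" "mset (map snd qs) = y" by blast
  then show "(x, y) \<in> addcl R"
  proof (induction qs arbitrary: x y)
    case Nil then show ?case by (auto intro: addcl.empty)
  next
    case (Cons q qs)
    then show ?case by (cases q) (auto intro: addcl.add)
  qed
qed


definition cl1 :: "'l \<Rightarrow> 'p set \<Rightarrow> ('p,'l) trans set \<Rightarrow> ('p \<times> 'p) set \<Rightarrow> 'p multiset \<Rightarrow> 'p multiset \<Rightarrow> ('p,'l) trans \<Rightarrow> bool" where
"cl1 tau S T R m1 m2 t1 \<longleftrightarrow>
        (tau_seq_trans tau t1 \<and>
          (\<exists>\<sigma> m2'. tau_seq tau S T \<sigma> \<and> fire_seq m2 \<sigma> m2' \<and> Psi (pre t1) \<sigma> (addcl R) \<and>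
             (pre t1, postseq \<sigma>) \<in> addcl R \<and> (post t1, postseq \<sigma>) \<in> addcl R \<and>
             (m1 - pre t1, m2 - preseq \<sigma>) \<in> addcl R))
        \<or> (\<exists>\<sigma> t2 m m2'. t2 \<in> T \<and> tau_seq tau S T \<sigma> \<and> fire_seq m2 \<sigma> m \<and> firing m t2 m2' \<and>
             postseq \<sigma> = pre t2 \<and> lab t1 = lab t2 \<and> Psi (pre t1) \<sigma> (addcl R) \<and>
             (pre t1, postseq \<sigma>) \<in> addcl R \<and> (post t1, post t2) \<in> addcl R \<and>
             (m1 - pre t1, m2 - preseq \<sigma>) \<in> addcl R)"

definition clause :: "'l \<Rightarrow> 'p set \<Rightarrow> ('p,'l) trans set \<Rightarrow> ('p \<times> 'p) set \<Rightarrow> bool" where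
"clause tau S T R \<longleftrightarrow> (\<forall>(m1, m2)\<in>addcl R. \<forall>t1\<in>T. \<forall>m1'. firing m1 t1 m1' \<longrightarrow> cl1 tau S T R m1 m2 t1)"

lemma Psi_conv: "Psi m \<sigma> (addcl (R\<inverse>)) = Phi \<sigma> m (addcl R)"
  by (simp add: Psi_def Phi_def addcl_conv)

lemma cl1_conv: "cl1 tau S T (R\<inverse>) m2 m1 t2 \<longleftrightarrow>
       (tau_seq_trans tau t2 \<and>
          (\<exists>\<sigma> m1'. tau_seq tau S T \<sigma> \<and> fire_seq m1 \<sigma> m1' \<and> Phi \<sigma> (pre t2) (addcl R) \<and>
             (postseq \<sigma>, pre t2) \<in> addcl R \<and> (postseq \<sigma>, post t2) \<in> addcl R \<and>
             (m1 - preseq \<sigma>, m2 - pre t2) \<in> addcl R))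
        \<or> (\<exists>\<sigma> t1 m m1'. t1 \<in> T \<and> tau_seq tau S T \<sigma> \<and> fire_seq m1 \<sigma> m \<and> firing m t1 m1' \<and>
             postseq \<sigma> = pre t1 \<and> lab t1 = lab t2 \<and> Phi \<sigma> (pre t2) (addcl R) \<and>
             (postseq \<sigma>, pre t2) \<in> addcl R \<and> (post t1, post t2) \<in> addcl R \<and>
             (m1 - preseq \<sigma>, m2 - pre t2) \<in> addcl R)"
  unfolding cl1_def Psi_conv addcl_conv by (simp only: eq_commute[where a="lab t2"])

lemma bpb_split: "branching_place_bisim tau S A T R \<longleftrightarrow> R \<subseteq> S \<times> S \<and> clause tau S T R \<and> clause tau S T (R\<inverse>)"
proof -
  have c2: "clause tau S T (R\<inverse>) \<longleftrightarrow> (\<forall>(m1, m2)\<in>addcl R. \<forall>t2\<in>T. \<forall>m2'. firing m2 t2 m2' \<longrightarrow> cl1 tau S T (R\<inverse>) m2 m1 t2)"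
    unfolding clause_def
  proof
    assume H: "\<forall>(m1, m2)\<in>addcl (R\<inverse>). \<forall>t1\<in>T. \<forall>m1'. firing m1 t1 m1' \<longrightarrow> cl1 tau S T (R\<inverse>) m1 m2 t1"
    show "\<forall>(m1, m2)\<in>addcl R. \<forall>t2\<in>T. \<forall>m2'. firing m2 t2 m2' \<longrightarrow> cl1 tau S T (R\<inverse>) m2 m1 t2"
    proof (clarify)
      fix m1 m2 t2 m2' assume "(m1, m2) \<in> addcl R" "t2 \<in> T" "firing m2 t2 m2'"
      then show "cl1 tau S T (R\<inverse>) m2 m1 t2" using H addcl_conv[of m2 m1 R] by blast
    qed
  next
    assume H: "\<forall>(m1, m2)\<in>addcl R. \<forall>t2\<in>T. \<forall>m2'. firing m2 t2 m2' \<longrightarrow> cl1 tau S T (R\<inverse>) m2 m1 t2"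
    show "\<forall>(m1, m2)\<in>addcl (R\<inverse>). \<forall>t1\<in>T. \<forall>m1'. firing m1 t1 m1' \<longrightarrow> cl1 tau S T (R\<inverse>) m1 m2 t1"
    proof (clarify)
      fix m1 m2 t1 m1' assume "(m1, m2) \<in> addcl (R\<inverse>)" "t1 \<in> T" "firing m1 t1 m1'"
      then show "cl1 tau S T (R\<inverse>) m1 m2 t1" using H addcl_conv[of m1 m2 R] by blast
    qed
  qed
  have bs: "(\<forall>(a, b)\<in>X. P a b \<and> Q a b) \<longleftrightarrow> (\<forall>(a, b)\<in>X. P a b) \<and> (\<forall>(a, b)\<in>X. Q a b)" for X P Q
    by auto
  show ?thesis
    unfolding branching_place_bisim_def c2 cl1_conv
    unfolding clause_def cl1_def bs by (rule refl)
qed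

lemma fire_pre: "firing (pre t) t (post t)"
  by (simp add: firing_def)

lemma diff_empty_sub: "(a::'a multiset) - b = {#} \<Longrightarrow> a \<subseteq># b"
  unfolding subseteq_mset_def
proof
  fix x assume "a - b = {#}"
  then have "count (a - b) x = 0" by simp
  then show "count a x \<le> count b x" by simp
qed

lemma cl1_small: "cl1 tau S T R (pre t1) p2 t1 \<longleftrightarrow>
   (tau_seq_trans tau t1 \<and> (\<exists>\<sigma>. tau_seq tau S T \<sigma> \<and> preseq \<sigma> = p2 \<and> Psi (pre t1) \<sigma> (addcl R) \<and>
       (pre t1, postseq \<sigma>) \<in> addcl R \<and> (post t1, postseq \<sigma>) \<in> addcl R))
   \<or> (\<exists>\<sigma> t2. t2 \<in> T \<and> tau_seq tau S T \<sigma> \<and> preseq \<sigma> = p2 \<and> postseq \<sigma> = pre t2 \<and> lab t1 = lab t2 \<and>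
       Psi (pre t1) \<sigma> (addcl R) \<and> (pre t1, postseq \<sigma>) \<in> addcl R \<and> (post t1, post t2) \<in> addcl R)"
  (is "?L \<longleftrightarrow> ?R")
proof -
  have key1: "preseq \<sigma> = p2 \<and> m = postseq \<sigma>" if a1: "fire_seq p2 \<sigma> m" and a2: "(pre t1 - pre t1, p2 - preseq \<sigma>) \<in> addcl R" for \<sigma> m
  proof -
    have "({#}, p2 - preseq \<sigma>) \<in> addcl R" using a2 by simp
    then have "p2 - preseq \<sigma> = {#}" by (rule addcl_empty_left[THEN iffD1])
    then have "p2 \<subseteq># preseq \<sigma>" by (rule diff_empty_sub)
    moreover have "preseq \<sigma> \<subseteq># p2" using a1 by (rule preseq_sub)
    ultimately have e: "preseq \<sigma> = p2" by (rule subset_mset.antisym[rotated])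
    have "fire_seq p2 \<sigma> (postseq \<sigma>)" using fire_preseq[of \<sigma>] unfolding e .
    then have "m = postseq \<sigma>" using a1 by (rule fire_seq_det[rotated])
    with e show ?thesis by simp
  qed
  have key2: "fire_seq p2 \<sigma> (postseq \<sigma>)" "(pre t1 - pre t1, p2 - preseq \<sigma>) \<in> addcl R" if "preseq \<sigma> = p2" for \<sigma>
  proof -
    show "fire_seq p2 \<sigma> (postseq \<sigma>)" using fire_preseq[of \<sigma>] unfolding that .
    show "(pre t1 - pre t1, p2 - preseq \<sigma>) \<in> addcl R" using that by (simp add: addcl.empty)
  qed
  show ?thesis
  proof
    assume "cl1 tau S T R (pre t1) p2 t1"
    then show ?R unfolding cl1_def
    proof (elim disjE exE conjE)
      fix \<sigma> m2' assume a: "tau_seq_trans tau t1" "tau_seq tau S T \<sigma>" "fire_seq p2 \<sigma> m2'" "Psi (pre t1) \<sigma> (addcl R)"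
        "(pre t1, postseq \<sigma>) \<in> addcl R" "(post t1, postseq \<sigma>) \<in> addcl R" "(pre t1 - pre t1, p2 - preseq \<sigma>) \<in> addcl R"
      have "preseq \<sigma> = p2" using key1[OF a(3) a(7)] by simp
      then show ?thesis using a by (intro disjI1 conjI exI[of _ \<sigma>])
    next
      fix \<sigma> t2 m m2' assume a: "t2 \<in> T" "tau_seq tau S T \<sigma>" "fire_seq p2 \<sigma> m" "firing m t2 m2'"
        "postseq \<sigma> = pre t2" "lab t1 = lab t2" "Psi (pre t1) \<sigma> (addcl R)"
        "(pre t1, postseq \<sigma>) \<in> addcl R" "(post t1, post t2) \<in> addcl R" "(pre t1 - pre t1, p2 - preseq \<sigma>) \<in> addcl R"
      have "preseq \<sigma> = p2" using key1[OF a(3) a(10)] by simp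
      then show ?thesis using a by (intro disjI2 conjI exI[of _ \<sigma>] exI[of _ t2])
    qed
  next
    assume ?R
    then show "cl1 tau S T R (pre t1) p2 t1" 
    proof (elim disjE exE conjE)
      fix \<sigma> assume a: "tau_seq_trans tau t1" "tau_seq tau S T \<sigma>" "preseq \<sigma> = p2" "Psi (pre t1) \<sigma> (addcl R)"
        "(pre t1, postseq \<sigma>) \<in> addcl R" "(post t1, postseq \<sigma>) \<in> addcl R"
      note k = key2[OF a(3)]
      show ?thesis unfolding cl1_def using a k by (intro disjI1 conjI exI[of _ \<sigma>] exI[of _ "postseq \<sigma>"])
    next
      fix \<sigma> t2 assume a: "t2 \<in> T" "tau_seq tau S T \<sigma>" "preseq \<sigma> = p2" "postseq \<sigma> = pre t2" "lab t1 = lab t2"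
        "Psi (pre t1) \<sigma> (addcl R)" "(pre t1, postseq \<sigma>) \<in> addcl R" "(post t1, post t2) \<in> addcl R"
      have f: "firing (postseq \<sigma>) t2 (post t2)" using fire_pre[of t2] unfolding a(4)[symmetric] .
      note k = key2[OF a(3)]
      show ?thesis unfolding cl1_def using a k f by (intro disjI2 conjI exI[of _ \<sigma>] exI[of _ t2] exI[of _ "postseq \<sigma>"] exI[of _ "post t2"])
    qed
  qed
qed

lemma cl1_extend:
  assumes c: "cl1 tau S T R (pre t1) p2 t1" and r: "(m1 - pre t1, r) \<in> addcl R"
  shows "cl1 tau S T R m1 (p2 + r) t1"
  using c unfolding cl1_small
proof (elim disjE exE conjE)
  fix \<sigma> assume a: "tau_seq_trans tau t1" "tau_seq tau S T \<sigma>" "preseq \<sigma> = p2" "Psi (pre t1) \<sigma> (addcl R)"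
      "(pre t1, postseq \<sigma>) \<in> addcl R" "(post t1, postseq \<sigma>) \<in> addcl R"
  have f: "fire_seq (p2 + r) \<sigma> (postseq \<sigma> + r)" using fire_seq_frame[OF fire_preseq[of \<sigma>]] unfolding a(3) .
  have e: "(m1 - pre t1, p2 + r - preseq \<sigma>) \<in> addcl R" using r a(3) by simp
  show ?thesis unfolding cl1_def using a f e by (intro disjI1 conjI exI[of _ \<sigma>] exI[of _ "postseq \<sigma> + r"])
next
  fix \<sigma> t2 assume a: "t2 \<in> T" "tau_seq tau S T \<sigma>" "preseq \<sigma> = p2" "postseq \<sigma> = pre t2" "lab t1 = lab t2"
      "Psi (pre t1) \<sigma> (addcl R)" "(pre t1, postseq \<sigma>) \<in> addcl R" "(post t1, post t2) \<in> addcl R"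
  have f1: "fire_seq (p2 + r) \<sigma> (postseq \<sigma> + r)" using fire_seq_frame[OF fire_preseq[of \<sigma>]] unfolding a(3) .
  have "firing (postseq \<sigma>) t2 (post t2)" using fire_pre[of t2] unfolding a(4)[symmetric] .
  then have f2: "firing (postseq \<sigma> + r) t2 (post t2 + r)" by (rule firing_frame)
  have e: "(m1 - pre t1, p2 + r - preseq \<sigma>) \<in> addcl R" using r a(3) by simp
  show ?thesis unfolding cl1_def using a f1 f2 e
    by (intro disjI2 conjI exI[of _ \<sigma>] exI[of _ t2] exI[of _ "postseq \<sigma> + r"] exI[of _ "post t2 + r"])
qed

lemma clause_small: "clause tau S T R \<longleftrightarrow> (\<forall>t1\<in>T. \<forall>p2. (pre t1, p2) \<in> addcl R \<longrightarrow> cl1 tau S T R (pre t1) p2 t1)"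
proof
  assume H: "clause tau S T R"
  have h: "\<And>m1 m2 t1 m1'. (m1, m2) \<in> addcl R \<Longrightarrow> t1 \<in> T \<Longrightarrow> firing m1 t1 m1' \<Longrightarrow> cl1 tau S T R m1 m2 t1"
    using H unfolding clause_def by blast
  show "\<forall>t1\<in>T. \<forall>p2. (pre t1, p2) \<in> addcl R \<longrightarrow> cl1 tau S T R (pre t1) p2 t1"
  proof (intro ballI allI impI)
    fix t1 p2 assume "t1 \<in> T" "(pre t1, p2) \<in> addcl R"
    then show "cl1 tau S T R (pre t1) p2 t1" using h fire_pre by blast
  qed
next
  assume H: "\<forall>t1\<in>T. \<forall>p2. (pre t1, p2) \<in> addcl R \<longrightarrow> cl1 tau S T R (pre t1) p2 t1"
  show "clause tau S T R" unfolding clause_def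
  proof (clarify)
    fix m1 m2 t1 m1' assume m: "(m1, m2) \<in> addcl R" and t: "t1 \<in> T" and f: "firing m1 t1 m1'"
    have "pre t1 \<subseteq># m1" using f by (simp add: firing_def)
    then obtain p r where pr: "(pre t1, p) \<in> addcl R" "(m1 - pre t1, r) \<in> addcl R" "m2 = p + r"
      using addcl_decomp[OF m] by blast
    have "cl1 tau S T R (pre t1) p t1" using H t pr(1) by blast
    then show "cl1 tau S T R m1 m2 t1" unfolding pr(3) using pr(2) by (rule cl1_extend)
  qed
qed


definition good_dec :: "'l \<Rightarrow> 'p set \<Rightarrow> ('p,'l) trans set \<Rightarrow> ('p,'l) trans list list \<Rightarrow> bool" where
  "good_dec tau S T \<sigma>s \<longleftrightarrow> \<sigma>s \<noteq> [] \<and> (\<forall>\<rho>\<in>set \<sigma>s. tau_1_seq tau S T \<rho>) \<and>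
     preseq (concat \<sigma>s) = sum_list (map preseq \<sigma>s) \<and> postseq (concat \<sigma>s) = sum_list (map postseq \<sigma>s)"

lemma tau_seq_dec: "tau_seq tau S T \<sigma> \<longleftrightarrow> (\<exists>\<sigma>s. good_dec tau S T \<sigma>s \<and> \<sigma> = concat \<sigma>s)"
  unfolding tau_seq_def tau_k_seq_def good_dec_def
proof
  assume "\<exists>k\<ge>1. \<exists>\<sigma>s. length \<sigma>s = k \<and> \<sigma> = concat \<sigma>s \<and> (\<forall>\<rho>\<in>set \<sigma>s. tau_1_seq tau S T \<rho>) \<and>
     preseq \<sigma> = sum_list (map preseq \<sigma>s) \<and> postseq \<sigma> = sum_list (map postseq \<sigma>s)"
  then obtain k \<sigma>s where "k \<ge> 1" "length \<sigma>s = k" "\<sigma> = concat \<sigma>s" "\<forall>\<rho>\<in>set \<sigma>s. tau_1_seq tau S T \<rho>"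
     "preseq \<sigma> = sum_list (map preseq \<sigma>s)" "postseq \<sigma> = sum_list (map postseq \<sigma>s)" by blast
  then show "\<exists>\<sigma>s. (\<sigma>s \<noteq> [] \<and> (\<forall>\<rho>\<in>set \<sigma>s. tau_1_seq tau S T \<rho>) \<and> preseq (concat \<sigma>s) = sum_list (map preseq \<sigma>s) \<and>
       postseq (concat \<sigma>s) = sum_list (map postseq \<sigma>s)) \<and> \<sigma> = concat \<sigma>s"
    by (intro exI[of _ \<sigma>s]) auto
next
  assume "\<exists>\<sigma>s. (\<sigma>s \<noteq> [] \<and> (\<forall>\<rho>\<in>set \<sigma>s. tau_1_seq tau S T \<rho>) \<and> preseq (concat \<sigma>s) = sum_list (map preseq \<sigma>s) \<and>
       postseq (concat \<sigma>s) = sum_list (map postseq \<sigma>s)) \<and> \<sigma> = concat \<sigma>s"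
  then obtain \<sigma>s where "\<sigma>s \<noteq> []" "\<forall>\<rho>\<in>set \<sigma>s. tau_1_seq tau S T \<rho>" "preseq (concat \<sigma>s) = sum_list (map preseq \<sigma>s)"
    "postseq (concat \<sigma>s) = sum_list (map postseq \<sigma>s)" "\<sigma> = concat \<sigma>s" by blast
  then show "\<exists>k\<ge>1. \<exists>\<sigma>s. length \<sigma>s = k \<and> \<sigma> = concat \<sigma>s \<and> (\<forall>\<rho>\<in>set \<sigma>s. tau_1_seq tau S T \<rho>) \<and>
     preseq \<sigma> = sum_list (map preseq \<sigma>s) \<and> postseq \<sigma> = sum_list (map postseq \<sigma>s)"
    by (intro exI[of _ "length \<sigma>s"] conjI exI[of _ \<sigma>s]) (auto simp: Suc_le_eq)
qed

definition chainT :: "('p,'l) trans list \<Rightarrow> bool" where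
  "chainT \<rho> \<longleftrightarrow> (\<forall>i. Suc i < length \<rho> \<longrightarrow> post (\<rho> ! i) = pre (\<rho> ! Suc i))"

lemma tau_1_seq_alt: "tau_1_seq tau S T \<rho> \<longleftrightarrow> \<rho> \<noteq> [] \<and>
     (\<forall>t\<in>set \<rho>. (t \<in> T \<or> (\<exists>s\<in>S. t = idle tau s)) \<and> tau_seq_trans tau t) \<and> chainT \<rho>"
  unfolding tau_1_seq_def chainT_def by simp

lemma allSuc: "(\<forall>i. P i) \<longleftrightarrow> P 0 \<and> (\<forall>i. P (Suc i))"
  by (metis not0_implies_Suc)

lemma chainT_Cons: "chainT (t # \<rho>) \<longleftrightarrow> (\<rho> \<noteq> [] \<longrightarrow> post t = pre (hd \<rho>)) \<and> chainT \<rho>"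
proof (cases \<rho>)
  case Nil then show ?thesis by (simp add: chainT_def)
next
  case (Cons u \<rho>')
  have "chainT (t # u # \<rho>') \<longleftrightarrow> (\<forall>i. Suc i < length (t # u # \<rho>') \<longrightarrow> post ((t # u # \<rho>') ! i) = pre ((t # u # \<rho>') ! Suc i))"
    unfolding chainT_def ..
  also have "\<dots> \<longleftrightarrow> post t = pre u \<and> (\<forall>i. Suc (Suc i) < length (t # u # \<rho>') \<longrightarrow> post ((t # u # \<rho>') ! Suc i) = pre ((t # u # \<rho>') ! Suc (Suc i)))"
    by (subst allSuc) simp
  also have "\<dots> \<longleftrightarrow> post t = pre u \<and> chainT (u # \<rho>')"
    unfolding chainT_def by simp
  finally show ?thesis using Cons by simp
qed

lemma chain_pre_post: "\<rho> \<noteq> [] \<Longrightarrow> chainT \<rho> \<Longrightarrow> (\<forall>t\<in>set \<rho>. size (pre t) = 1 \<and> size (post t) = 1) \<Longrightarrow>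
   preseq \<rho> = pre (hd \<rho>) \<and> postseq \<rho> = post (last \<rho>)"
proof (induction \<rho>)
  case Nil then show ?case by simp
next
  case (Cons t \<rho>)
  show ?case
  proof (cases "\<rho> = []")
    case True then show ?thesis by simp
  next
    case False
    have c: "post t = pre (hd \<rho>)" "chainT \<rho>" using Cons.prems(2) False unfolding chainT_Cons by simp_all
    have IH: "preseq \<rho> = pre (hd \<rho>)" "postseq \<rho> = post (last \<rho>)" using Cons.IH False c(2) Cons.prems(3) by auto
    show ?thesis using False c IH by simp
  qed
qed

lemma tau1_pre_post: "tau_1_seq tau S T \<rho> \<Longrightarrow> preseq \<rho> = pre (hd \<rho>) \<and> postseq \<rho> = post (last \<rho>)"
  unfolding tau_1_seq_alt tau_seq_trans_def by (intro chain_pre_post) auto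

lemma concat_prepost: "list_all2 (\<lambda>a b. preseq a = preseq b \<and> postseq a = postseq b) xs ys \<Longrightarrow>
   preseq (concat xs) = preseq (concat ys) \<and> postseq (concat xs) = postseq (concat ys)"
  by (induction rule: list_all2_induct) (simp_all add: preseq_append postseq_append)

definition runu :: "'p multiset \<Rightarrow> ('p,'l) trans list \<Rightarrow> 'p multiset" where
  "runu m xs = foldl (\<lambda>m t. m - pre t + post t) m xs"

lemma befores_append: "befores m (xs @ ys) = befores m xs @ befores (runu m xs) ys"
  by (induction xs arbitrary: m) (auto simp: runu_def)

lemma fire_runu: "fire_seq m xs m' \<Longrightarrow> m' = runu m xs"
  by (induction xs arbitrary: m) (auto simp: runu_def firing_def)

lemma fire_chain: "fire_seq M \<beta> M' \<Longrightarrow> \<beta> \<noteq> [] \<Longrightarrow> chainT \<beta> \<Longrightarrow> M' = M - pre (hd \<beta>) + post (last \<beta>)"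
proof (induction \<beta> arbitrary: M)
  case Nil then show ?case by simp
next
  case (Cons t \<beta>)
  obtain M1 where f: "firing M t M1" "fire_seq M1 \<beta> M'" using Cons.prems by auto
  have M1: "M1 = M - pre t + post t" using f(1) by (simp add: firing_def)
  show ?case
  proof (cases "\<beta> = []")
    case True then show ?thesis using f M1 by simp
  next
    case False
    have c: "post t = pre (hd \<beta>)" "chainT \<beta>" using Cons.prems(3) False unfolding chainT_Cons by simp_all
    have "M' = M1 - pre (hd \<beta>) + post (last \<beta>)" using Cons.IH f(2) False c(2) by blast
    then show ?thesis using M1 c(1) False by simp
  qed
qed


lemma chainT_append: "chainT (xs @ ys) \<longleftrightarrow> chainT xs \<and> chainT ys \<and> (xs \<noteq> [] \<and> ys \<noteq> [] \<longrightarrow> post (last xs) = pre (hd ys))"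
proof (induction xs)
  case Nil then show ?case by (simp add: chainT_def)
next
  case (Cons x xs)
  show ?case
  proof (cases "xs = []")
    case True
    have n: "chainT []" "chainT [x]" by (simp_all add: chainT_def)
    show ?thesis using True n by (simp add: chainT_Cons) blast
  next
    case False
    have "chainT ((x # xs) @ ys) \<longleftrightarrow> post x = pre (hd xs) \<and> chainT (xs @ ys)"
      using False by (simp add: chainT_Cons)
    also have "\<dots> \<longleftrightarrow> post x = pre (hd xs) \<and> chainT xs \<and> chainT ys \<and> (ys \<noteq> [] \<longrightarrow> post (last xs) = pre (hd ys))"
      using Cons.IH False by simp
    also have "\<dots> \<longleftrightarrow> chainT (x # xs) \<and> chainT ys \<and> (x # xs \<noteq> [] \<and> ys \<noteq> [] \<longrightarrow> post (last (x # xs)) = pre (hd ys))"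
      using False by (simp add: chainT_Cons)
    finally show ?thesis .
  qed
qed

lemma single_pre:
  assumes "tau_1_seq tau S T \<rho>" "\<forall>t\<in>T. set_mset (pre t) \<subseteq> S" "t \<in> set \<rho>"
  shows "\<exists>a\<in>S. pre t = {#a#}"
proof -
  have t: "t \<in> T \<or> (\<exists>s\<in>S. t = idle tau s)" "size (pre t) = 1"
    using assms(1,3) unfolding tau_1_seq_alt tau_seq_trans_def by auto
  show ?thesis
  proof (cases "t \<in> T")
    case True
    obtain a where a: "pre t = {#a#}" using size_1_singleton_mset[OF t(2)] by blast
    then have "a \<in> S" using assms(2) True by auto
    then show ?thesis using a by blast
  next
    case False
    then obtain s where "s \<in> S" "t = idle tau s" using t(1) by blast
    then show ?thesis by (auto simp: idle_def pre_def)
  qed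
qed

lemma cycle_exists:
  assumes fin: "finite S" and r: "tau_1_seq tau S T \<rho>" and h: "\<forall>t\<in>T. set_mset (pre t) \<subseteq> S"
    and l: "card S < length \<rho>"
  shows "\<exists>i j. i < j \<and> j < length \<rho> \<and> pre (\<rho> ! i) = pre (\<rho> ! j)"
proof -
  have sub: "set (map pre \<rho>) \<subseteq> (\<lambda>a. {#a#}) ` S"
  proof
    fix x assume "x \<in> set (map pre \<rho>)"
    then obtain t where t: "t \<in> set \<rho>" "x = pre t" by auto
    then obtain a where "a \<in> S" "pre t = {#a#}" using single_pre[OF r h] by blast
    then show "x \<in> (\<lambda>a. {#a#}) ` S" using t by auto
  qed
  have "card (set (map pre \<rho>)) \<le> card ((\<lambda>a. {#a#}) ` S)"
    by (rule card_mono[OF finite_imageI[OF fin] sub])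
  also have "\<dots> \<le> card S" by (rule card_image_le[OF fin])
  finally have c: "card (set (map pre \<rho>)) < length (map pre \<rho>)" using l by simp
  have "\<not> distinct (map pre \<rho>)"
  proof
    assume "distinct (map pre \<rho>)"
    then have "card (set (map pre \<rho>)) = length (map pre \<rho>)" by (rule distinct_card)
    with c show False by simp
  qed
  then obtain i j where ij: "i < length \<rho>" "j < length \<rho>" "i \<noteq> j" "pre (\<rho> ! i) = pre (\<rho> ! j)"
    unfolding distinct_conv_nth by auto
  show ?thesis
  proof (cases "i < j")
    case True then show ?thesis using ij by blast
  next
    case False then have "j < i" using ij(3) by simp
    then show ?thesis using ij by (intro exI[of _ j] exI[of _ i]) auto
  qed
qed

lemma shorten_step:
  assumes fin: "finite S" and h: "\<forall>t\<in>T. set_mset (pre t) \<subseteq> S" and g: "good_dec tau S T \<sigma>s"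
    and k: "k < length \<sigma>s" and long: "card S < length (\<sigma>s ! k)"
  shows "\<exists>\<sigma>s'. good_dec tau S T \<sigma>s' \<and> length \<sigma>s' = length \<sigma>s \<and> sum_list (map length \<sigma>s') < sum_list (map length \<sigma>s) \<and>
     preseq (concat \<sigma>s') = preseq (concat \<sigma>s) \<and> postseq (concat \<sigma>s') = postseq (concat \<sigma>s) \<and>
     set (befores (preseq (concat \<sigma>s')) (concat \<sigma>s')) \<subseteq> set (befores (preseq (concat \<sigma>s)) (concat \<sigma>s))"
proof -
  define \<rho> where "\<rho> = \<sigma>s ! k"
  have r: "tau_1_seq tau S T \<rho>" using g k unfolding good_dec_def \<rho>_def by auto
  obtain i j where ij: "i < j" "j < length \<rho>" "pre (\<rho> ! i) = pre (\<rho> ! j)"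
    using cycle_exists[OF fin r h] long unfolding \<rho>_def by blast
  define \<alpha> where "\<alpha> = take i \<rho>"
  define \<beta> where "\<beta> = drop i (take j \<rho>)"
  define \<gamma> where "\<gamma> = drop j \<rho>"
  have split: "\<rho> = \<alpha> @ \<beta> @ \<gamma>"
  proof -
    have "take i (take j \<rho>) = \<alpha>" using ij unfolding \<alpha>_def by (simp add: min_def)
    then have "\<alpha> @ \<beta> = take j \<rho>" unfolding \<beta>_def by (metis append_take_drop_id)
    then show ?thesis unfolding \<gamma>_def by (metis append.assoc append_take_drop_id)
  qed
  have bne: "\<beta> \<noteq> []" using ij unfolding \<beta>_def by simp
  have gne: "\<gamma> \<noteq> []" using ij unfolding \<gamma>_def by simp
  have hb: "hd \<beta> = \<rho> ! i" using ij unfolding \<beta>_def by (simp add: hd_drop_conv_nth)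
  have hg: "hd \<gamma> = \<rho> ! j" using ij unfolding \<gamma>_def by (simp add: hd_drop_conv_nth)
  have r1: "\<rho> \<noteq> []" "\<forall>t\<in>set \<rho>. (t \<in> T \<or> (\<exists>s\<in>S. t = idle tau s)) \<and> tau_seq_trans tau t" "chainT \<rho>"
    using r unfolding tau_1_seq_alt by auto
  have ch: "chainT \<alpha>" "chainT \<beta>" "chainT \<gamma>" "\<alpha> \<noteq> [] \<longrightarrow> post (last \<alpha>) = pre (hd \<beta>)"
      "post (last \<beta>) = pre (hd \<gamma>)"
    using r1(3) bne gne unfolding split chainT_append by auto
  define \<rho>' where "\<rho>' = \<alpha> @ \<gamma>"
  have r': "tau_1_seq tau S T \<rho>'"
    unfolding tau_1_seq_alt
  proof (intro conjI)
    show "\<rho>' \<noteq> []" using gne unfolding \<rho>'_def by simp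
    show "\<forall>t\<in>set \<rho>'. (t \<in> T \<or> (\<exists>s\<in>S. t = idle tau s)) \<and> tau_seq_trans tau t"
      using r1(2) unfolding split \<rho>'_def by auto
    show "chainT \<rho>'" unfolding \<rho>'_def chainT_append using ch hb hg ij(3) by simp
  qed
  have cyc: "post (last \<beta>) = pre (hd \<beta>)" using ch(5) hb hg ij(3) by simp
  have pp: "preseq \<rho>' = preseq \<rho> \<and> postseq \<rho>' = postseq \<rho>"
  proof -
    have "pre (hd \<rho>') = pre (hd \<rho>)"
    proof (cases "\<alpha> = []")
      case True
      then have "i = 0" using ij r1(1) unfolding \<alpha>_def by simp
      then show ?thesis using True hg ij(3) r1(1) unfolding \<rho>'_def by (simp add: hd_conv_nth)
    next
      case False then show ?thesis unfolding \<rho>'_def split by simp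
    qed
    moreover have "last \<rho>' = last \<rho>" using gne unfolding \<rho>'_def split by simp
    ultimately show ?thesis using tau1_pre_post[OF r] tau1_pre_post[OF r'] by simp
  qed
  define \<sigma>s' where "\<sigma>s' = \<sigma>s[k := \<rho>']"
  have len: "length \<sigma>s' = length \<sigma>s" unfolding \<sigma>s'_def by simp
  have la2: "list_all2 (\<lambda>a b. preseq a = preseq b \<and> postseq a = postseq b) \<sigma>s' \<sigma>s"
    unfolding list_all2_conv_all_nth \<sigma>s'_def using pp k \<rho>_def by (auto simp: nth_list_update)
  have ce: "preseq (concat \<sigma>s') = preseq (concat \<sigma>s)" "postseq (concat \<sigma>s') = postseq (concat \<sigma>s)"
    using concat_prepost[OF la2] by auto
  have mp: "map preseq \<sigma>s' = map preseq \<sigma>s" "map postseq \<sigma>s' = map postseq \<sigma>s"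
  proof -
    have a: "(map preseq \<sigma>s)[k := preseq (\<sigma>s ! k)] = map preseq \<sigma>s" using k by (metis length_map list_update_id nth_map)
    have b: "(map postseq \<sigma>s)[k := postseq (\<sigma>s ! k)] = map postseq \<sigma>s" using k by (metis length_map list_update_id nth_map)
    show "map preseq \<sigma>s' = map preseq \<sigma>s" "map postseq \<sigma>s' = map postseq \<sigma>s"
      unfolding \<sigma>s'_def map_update using pp a b \<rho>_def by simp_all
  qed
  have g': "good_dec tau S T \<sigma>s'"
    unfolding good_dec_def
  proof (intro conjI)
    show "\<sigma>s' \<noteq> []" using len g unfolding good_dec_def by auto
    show "\<forall>\<rho>\<in>set \<sigma>s'. tau_1_seq tau S T \<rho>"
      using g r' unfolding good_dec_def \<sigma>s'_def by (auto dest: set_update_subset_insert[THEN subsetD])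
    show "preseq (concat \<sigma>s') = sum_list (map preseq \<sigma>s')" using ce mp g unfolding good_dec_def by simp
    show "postseq (concat \<sigma>s') = sum_list (map postseq \<sigma>s')" using ce mp g unfolding good_dec_def by simp
  qed
  have lt: "sum_list (map length \<sigma>s') < sum_list (map length \<sigma>s)"
  proof -
    have "length \<rho>' < length \<rho>" using bne unfolding \<rho>'_def split by simp
    moreover have "sum_list (map length \<sigma>s') = sum_list (map length \<sigma>s) + length \<rho>' - length \<rho>"
      unfolding \<sigma>s'_def map_update using k \<rho>_def by (simp add: sum_list_update)
    moreover have "length \<rho> \<le> sum_list (map length \<sigma>s)"
      using k \<rho>_def by (metis elem_le_sum_list length_map nth_map)
    ultimately show ?thesis by simp
  qed
  define X where "X = concat (take k \<sigma>s)"
  define Y where "Y = concat (drop (Suc k) \<sigma>s)"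
  have c1: "concat \<sigma>s = (X @ \<alpha>) @ \<beta> @ (\<gamma> @ Y)"
    using id_take_nth_drop[OF k] unfolding X_def Y_def \<rho>_def[symmetric]
    by (metis append.assoc concat.simps(2) concat_append split)
  have c2: "concat \<sigma>s' = (X @ \<alpha>) @ (\<gamma> @ Y)"
    unfolding \<sigma>s'_def upd_conv_take_nth_drop[OF k] X_def Y_def \<rho>'_def by simp
  define M0 where "M0 = preseq (concat \<sigma>s)"
  have "fire_seq M0 (concat \<sigma>s) (postseq (concat \<sigma>s))" unfolding M0_def by (rule fire_preseq)
  then obtain M1 M2 where f1: "fire_seq M0 (X @ \<alpha>) M1" and f2: "fire_seq M1 \<beta> M2"
    unfolding c1 fire_seq_append by blast
  have M2: "M2 = M1"
  proof -
    have "M2 = M1 - pre (hd \<beta>) + post (last \<beta>)" by (rule fire_chain[OF f2 bne ch(2)])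
    moreover have "pre (hd \<beta>) \<subseteq># M1"
      using f2 bne by (cases \<beta>) (auto simp: firing_def)
    ultimately show ?thesis using cyc by simp
  qed
  have r1u: "runu M0 (X @ \<alpha>) = M1" using fire_runu[OF f1] by simp
  have r2u: "runu M1 \<beta> = M1" using fire_runu[OF f2] M2 by simp
  have "set (befores M0 (concat \<sigma>s')) \<subseteq> set (befores M0 (concat \<sigma>s))"
    unfolding c1 c2 befores_append r1u r2u by auto
  then show ?thesis using g' len lt ce unfolding M0_def by (intro exI[of _ \<sigma>s']) simp
qed

lemma shorten_all:
  assumes fin: "finite S" and h: "\<forall>t\<in>T. set_mset (pre t) \<subseteq> S" and g: "good_dec tau S T \<sigma>s"
  shows "\<exists>\<sigma>s'. good_dec tau S T \<sigma>s' \<and> length \<sigma>s' = length \<sigma>s \<and> (\<forall>\<rho>\<in>set \<sigma>s'. length \<rho> \<le> card S) \<and>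
     preseq (concat \<sigma>s') = preseq (concat \<sigma>s) \<and> postseq (concat \<sigma>s') = postseq (concat \<sigma>s) \<and>
     set (befores (preseq (concat \<sigma>s')) (concat \<sigma>s')) \<subseteq> set (befores (preseq (concat \<sigma>s)) (concat \<sigma>s))"
  using g
proof (induction "sum_list (map length \<sigma>s)" arbitrary: \<sigma>s rule: less_induct)
  case less
  show ?case
  proof (cases "\<forall>\<rho>\<in>set \<sigma>s. length \<rho> \<le> card S")
    case True then show ?thesis using less.prems by (intro exI[of _ \<sigma>s]) auto
  next
    case False
    then obtain k where k: "k < length \<sigma>s" "card S < length (\<sigma>s ! k)"
      by (auto simp: in_set_conv_nth not_le)
    obtain \<sigma>s1 where s1: "good_dec tau S T \<sigma>s1" "length \<sigma>s1 = length \<sigma>s"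
        "sum_list (map length \<sigma>s1) < sum_list (map length \<sigma>s)"
        "preseq (concat \<sigma>s1) = preseq (concat \<sigma>s)" "postseq (concat \<sigma>s1) = postseq (concat \<sigma>s)"
        "set (befores (preseq (concat \<sigma>s1)) (concat \<sigma>s1)) \<subseteq> set (befores (preseq (concat \<sigma>s)) (concat \<sigma>s))"
      using shorten_step[OF fin h less.prems k] by blast
    obtain \<sigma>s2 where s2: "good_dec tau S T \<sigma>s2" "length \<sigma>s2 = length \<sigma>s1" "\<forall>\<rho>\<in>set \<sigma>s2. length \<rho> \<le> card S"
        "preseq (concat \<sigma>s2) = preseq (concat \<sigma>s1)" "postseq (concat \<sigma>s2) = postseq (concat \<sigma>s1)"
        "set (befores (preseq (concat \<sigma>s2)) (concat \<sigma>s2)) \<subseteq> set (befores (preseq (concat \<sigma>s1)) (concat \<sigma>s1))"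
      using less.hyps[OF s1(3) s1(1)] by blast
    show ?thesis using s1 s2 by (intro exI[of _ \<sigma>s2]) auto
  qed
qed


definition tr :: "nat \<Rightarrow> (nat, nat) trans" where "tr c = ({#pf c#}, 0, {#ps c#})"

lemma pre_tr[simp]: "pre (tr c) = {#pf c#}" and post_tr[simp]: "post (tr c) = {#ps c#}" and lab_tr[simp]: "lab (tr c) = 0"
  by (simp_all add: tr_def pre_def post_def lab_def)

lemma tau_seq_trans_tr: "tau_seq_trans 0 t \<longleftrightarrow> (\<exists>c. t = tr c)"
proof
  assume a: "tau_seq_trans 0 t"
  obtain x where x: "pre t = {#x#}" using a size_1_singleton_mset unfolding tau_seq_trans_def by blast
  obtain y where y: "post t = {#y#}" using a size_1_singleton_mset unfolding tau_seq_trans_def by blast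
  have l: "lab t = 0" using a unfolding tau_seq_trans_def by simp
  have "t = tr (pe x y)" using x y l by (cases t) (simp add: tr_def pre_def post_def lab_def)
  then show "\<exists>c. t = tr c" by blast
next
  assume "\<exists>c. t = tr c"
  then show "tau_seq_trans 0 t" by (auto simp: tau_seq_trans_def)
qed

definition isTau :: "nat list \<times> nat \<times> nat list \<Rightarrow> bool" where
  "isTau t \<longleftrightarrow> fst (snd t) = 0 \<and> length (fst t) = 1 \<and> length (snd (snd t)) = 1"

definition Elist :: "nat list \<Rightarrow> (nat list \<times> nat \<times> nat list) list \<Rightarrow> nat list" where
  "Elist ls lt = map (\<lambda>t. pe (hd (fst t)) (hd (snd (snd t)))) (filter isTau lt) @ map (\<lambda>s. pe s s) ls"

lemma trans_of_simps[simp]: "pre (trans_of t) = mset (fst t)" "post (trans_of t) = mset (snd (snd t))" "lab (trans_of t) = fst (snd t)"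
  by (cases t; simp add: trans_of_def pre_def post_def lab_def)+

lemma tr_eq_trans_of: "tr c = trans_of t \<longleftrightarrow> isTau t \<and> c = pe (hd (fst t)) (hd (snd (snd t)))"
proof -
  obtain a l b where t: "t = (a, l, b)" by (cases t) auto
  have "tr c = trans_of t \<longleftrightarrow> {#pf c#} = mset a \<and> 0 = l \<and> {#ps c#} = mset b"
    unfolding t by (simp add: tr_def trans_of_def)
  also have "\<dots> \<longleftrightarrow> a = [pf c] \<and> l = 0 \<and> b = [ps c]" by auto
  also have "\<dots> \<longleftrightarrow> isTau t \<and> c = pe (hd (fst t)) (hd (snd (snd t)))"
  proof
    assume "a = [pf c] \<and> l = 0 \<and> b = [ps c]"
    then show "isTau t \<and> c = pe (hd (fst t)) (hd (snd (snd t)))" unfolding t isTau_def by simp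
  next
    assume a: "isTau t \<and> c = pe (hd (fst t)) (hd (snd (snd t)))"
    then have "length a = 1" "length b = 1" "l = 0" unfolding t isTau_def by auto
    then obtain x y where "a = [x]" "b = [y]" by (metis length_0_conv length_Suc_conv One_nat_def)
    then show "a = [pf c] \<and> l = 0 \<and> b = [ps c]" using a \<open>l = 0\<close> unfolding t by simp
  qed
  finally show ?thesis .
qed

lemma E_char: "(tr c \<in> trans_of ` set lt \<or> (\<exists>s\<in>set ls. tr c = idle 0 s)) \<longleftrightarrow> c \<in> set (Elist ls lt)"
proof -
  have 1: "tr c \<in> trans_of ` set lt \<longleftrightarrow> c \<in> set (map (\<lambda>t. pe (hd (fst t)) (hd (snd (snd t)))) (filter isTau lt))"
  proof -
    have "tr c \<in> trans_of ` set lt \<longleftrightarrow> (\<exists>t\<in>set lt. tr c = trans_of t)" by auto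
    also have "\<dots> \<longleftrightarrow> (\<exists>t\<in>set lt. isTau t \<and> c = pe (hd (fst t)) (hd (snd (snd t))))" by (simp add: tr_eq_trans_of)
    finally show ?thesis by auto
  qed
  have 2: "(\<exists>s\<in>set ls. tr c = idle 0 s) \<longleftrightarrow> c \<in> set (map (\<lambda>s. pe s s) ls)"
  proof -
    have "tr c = idle 0 s \<longleftrightarrow> c = pe s s" for s
    proof
      assume "tr c = idle 0 s"
      then have "pf c = s" "ps c = s" by (simp_all add: tr_def idle_def)
      then show "c = pe s s" by (metis prod.collapse prod_decode_inverse)
    next
      assume "c = pe s s" then show "tr c = idle 0 s" by (simp add: tr_def idle_def)
    qed
    then show ?thesis by auto
  qed
  show ?thesis unfolding Elist_def using 1 2 by auto
qed

lemma chainT_tr: "chainT (map tr cs) \<longleftrightarrow> chainL cs"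
proof (induction cs rule: chainL.induct)
  case 1 then show ?case by (simp add: chainT_def)
next
  case (2 x) then show ?case by (simp add: chainT_def)
next
  case (3 x y xs) then show ?case by (simp add: chainT_Cons)
qed

lemma tau1_list: "tau_1_seq 0 (set ls) (trans_of ` set lt) \<rho> \<longleftrightarrow>
   (\<exists>cs. \<rho> = map tr cs \<and> cs \<noteq> [] \<and> set cs \<subseteq> set (Elist ls lt) \<and> chainL cs)"
proof
  assume a: "tau_1_seq 0 (set ls) (trans_of ` set lt) \<rho>"
  then have "\<forall>t\<in>set \<rho>. \<exists>c. t = tr c" unfolding tau_1_seq_alt tau_seq_trans_tr by blast
  then have "\<exists>cs. \<rho> = map tr cs" unfolding ex_map_conv .
  then obtain cs where cs: "\<rho> = map tr cs" by blast
  show "\<exists>cs. \<rho> = map tr cs \<and> cs \<noteq> [] \<and> set cs \<subseteq> set (Elist ls lt) \<and> chainL cs"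
  proof (intro exI[of _ cs] conjI)
    show "\<rho> = map tr cs" by (rule cs)
    show "cs \<noteq> []" using a cs unfolding tau_1_seq_alt by simp
    show "set cs \<subseteq> set (Elist ls lt)"
    proof
      fix x assume "x \<in> set cs"
      then have "tr x \<in> set \<rho>" using cs by simp
      then have "tr x \<in> trans_of ` set lt \<or> (\<exists>s\<in>set ls. tr x = idle 0 s)" using a unfolding tau_1_seq_alt by blast
      then show "x \<in> set (Elist ls lt)" unfolding E_char .
    qed
    have "chainT (map tr cs)" using a cs unfolding tau_1_seq_alt by simp
    then show "chainL cs" unfolding chainT_tr .
  qed
next
  assume "\<exists>cs. \<rho> = map tr cs \<and> cs \<noteq> [] \<and> set cs \<subseteq> set (Elist ls lt) \<and> chainL cs"
  then obtain cs where cs: "\<rho> = map tr cs" "cs \<noteq> []" "set cs \<subseteq> set (Elist ls lt)" "chainL cs" by blast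
  show "tau_1_seq 0 (set ls) (trans_of ` set lt) \<rho>"
    unfolding tau_1_seq_alt cs(1) chainT_tr
    using cs(2,3,4) E_char tau_seq_trans_tr by fastforce
qed

fun preL :: "nat list \<Rightarrow> nat list" where
  "preL [] = []"
| "preL (c # cs) = pf c # remove1 (ps c) (preL cs)"

lemma preL_mset: "preseq (map tr cs) = mset (preL cs)"
  by (induction cs) auto

definition updL :: "nat list \<Rightarrow> nat \<Rightarrow> nat list" where "updL ml c = ps c # remove1 (pf c) ml"

fun befL :: "nat list \<Rightarrow> nat list \<Rightarrow> nat list list" where
  "befL ml [] = []"
| "befL ml (c # cs) = ml # befL (updL ml c) cs"

lemma befL_mset: "befores (mset ml) (map tr cs) = map mset (befL ml cs)"
proof (induction cs arbitrary: ml)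
  case Nil then show ?case by simp
next
  case (Cons c cs) show ?case using Cons.IH[of "updL ml c"] by (simp add: updL_def)
qed

definition runL :: "nat list \<Rightarrow> nat list \<Rightarrow> nat list" where "runL ml cs = foldl updL ml cs"

lemma runL_mset: "runu (mset ml) (map tr cs) = mset (runL ml cs)"
  unfolding runu_def runL_def
proof (induction cs arbitrary: ml)
  case Nil then show ?case by simp
next
  case (Cons c cs) show ?case using Cons.IH[of "updL ml c"] by (simp add: updL_def)
qed

lemma postseq_runu: "postseq \<sigma> = runu (preseq \<sigma>) \<sigma>"
  by (rule fire_runu[OF fire_preseq])

definition addclL :: "nat list \<Rightarrow> nat list \<Rightarrow> nat list \<Rightarrow> bool" where
  "addclL Rl xs ys \<longleftrightarrow> (\<exists>qs\<in>set (List.n_lists (length xs) Rl). mset (map pf qs) = mset xs \<and> mset (map ps qs) = mset ys)"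

definition relOf :: "nat list \<Rightarrow> (nat \<times> nat) set" where "relOf Rl = (\<lambda>c. (pf c, ps c)) ` set Rl"

lemma addclL_iff: "(mset xs, mset ys) \<in> addcl (relOf Rl) \<longleftrightarrow> addclL Rl xs ys"
proof
  assume "(mset xs, mset ys) \<in> addcl (relOf Rl)"
  then obtain qs where qs: "set qs \<subseteq> relOf Rl" "mset (map fst qs) = mset xs" "mset (map snd qs) = mset ys"
    unfolding addcl_list by blast
  define qs' where "qs' = map (\<lambda>(a, b). pe a b) qs"
  have "set qs' \<subseteq> set Rl"
  proof
    fix c assume "c \<in> set qs'"
    then obtain a b where ab: "(a, b) \<in> set qs" "c = pe a b" unfolding qs'_def by auto
    then obtain d where "d \<in> set Rl" "(a, b) = (pf d, ps d)" using qs(1) unfolding relOf_def by auto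
    then show "c \<in> set Rl" using ab by (metis prod.collapse prod_decode_inverse)
  qed
  moreover have "length qs' = length xs" unfolding qs'_def using qs(2) by (metis length_map size_mset)
  moreover have "map pf qs' = map fst qs" "map ps qs' = map snd qs" unfolding qs'_def by auto
  ultimately show "addclL Rl xs ys" unfolding addclL_def set_n_lists using qs by (intro bexI[of _ qs']) auto
next
  assume "addclL Rl xs ys"
  then obtain qs where qs: "set qs \<subseteq> set Rl" "mset (map pf qs) = mset xs" "mset (map ps qs) = mset ys"
    unfolding addclL_def set_n_lists by blast
  show "(mset xs, mset ys) \<in> addcl (relOf Rl)" unfolding addcl_list
    using qs by (intro exI[of _ "map (\<lambda>c. (pf c, ps c)) qs"]) (auto simp: relOf_def o_def)
qed


definition RHOS :: "nat list \<Rightarrow> (nat list \<times> nat \<times> nat list) list \<Rightarrow> nat list list" where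
  "RHOS ls lt = concat (map (\<lambda>j. List.n_lists (Suc j) (Elist ls lt)) [0..<length ls])"

lemma RHOS_set: "cs \<in> set (RHOS ls lt) \<longleftrightarrow> cs \<noteq> [] \<and> length cs \<le> length ls \<and> set cs \<subseteq> set (Elist ls lt)"
proof
  assume "cs \<in> set (RHOS ls lt)"
  then obtain j where "j < length ls" "length cs = Suc j" "set cs \<subseteq> set (Elist ls lt)"
    unfolding RHOS_def by (auto simp: set_n_lists)
  then show "cs \<noteq> [] \<and> length cs \<le> length ls \<and> set cs \<subseteq> set (Elist ls lt)" by auto
next
  assume a: "cs \<noteq> [] \<and> length cs \<le> length ls \<and> set cs \<subseteq> set (Elist ls lt)"
  then obtain j where j: "length cs = Suc j" by (cases cs) auto
  then have jl: "j < length ls" using a by simp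
  have "cs \<in> set (List.n_lists (Suc j) (Elist ls lt))" unfolding set_n_lists using a j by simp
  then show "cs \<in> set (RHOS ls lt)" unfolding RHOS_def using jl by (force simp del: List.n_lists.simps)
qed

lemma sum_single: "sum_list (map (\<lambda>x. {#f x#}) xs) = mset (map f xs)"
  by (induction xs) auto

lemma good_dec_size: "good_dec tau S T \<sigma>s \<Longrightarrow> size (preseq (concat \<sigma>s)) = length \<sigma>s"
proof -
  assume g: "good_dec tau S T \<sigma>s"
  have "\<forall>\<rho>\<in>set \<sigma>s. size (preseq \<rho>) = 1"
  proof
    fix \<rho> assume "\<rho> \<in> set \<sigma>s"
    then have r: "tau_1_seq tau S T \<rho>" using g unfolding good_dec_def by auto
    then have "preseq \<rho> = pre (hd \<rho>)" using tau1_pre_post[OF r] by simp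
    moreover have "hd \<rho> \<in> set \<rho>" "\<rho> \<noteq> []" using r unfolding tau_1_seq_alt by auto
    ultimately show "size (preseq \<rho>) = 1" using r unfolding tau_1_seq_alt tau_seq_trans_def by auto
  qed
  then have "size (sum_list (map preseq \<sigma>s)) = length \<sigma>s"
    by (induction \<sigma>s) auto
  then show ?thesis using g unfolding good_dec_def by simp
qed

definition goodL :: "nat list \<Rightarrow> nat list list \<Rightarrow> bool" where
  "goodL p2l css \<longleftrightarrow> (\<forall>cs\<in>set css. chainL cs) \<and> mset (preL (concat css)) = mset (map (\<lambda>cs. pf (hd cs)) css) \<and>
     mset (map (\<lambda>cs. pf (hd cs)) css) = mset p2l \<and> mset (runL p2l (concat css)) = mset (map (\<lambda>cs. ps (last cs)) css)"

lemma tr_pre_post_list: "cs \<noteq> [] \<Longrightarrow> chainL cs \<Longrightarrow> preseq (map tr cs) = {#pf (hd cs)#} \<and> postseq (map tr cs) = {#ps (last cs)#}"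
proof -
  assume "cs \<noteq> []" "chainL cs"
  then have "preseq (map tr cs) = pre (hd (map tr cs)) \<and> postseq (map tr cs) = post (last (map tr cs))"
    by (intro chain_pre_post) (auto simp: chainT_tr)
  then show ?thesis using \<open>cs \<noteq> []\<close> by (simp add: hd_map last_map)
qed

lemma exists_sigma:
  assumes h: "\<forall>t\<in>trans_of ` set lt. set_mset (pre t) \<subseteq> set ls" and ne: "p2l \<noteq> []"
  shows "(\<exists>\<sigma>. tau_seq 0 (set ls) (trans_of ` set lt) \<sigma> \<and> preseq \<sigma> = mset p2l \<and>
            (\<forall>M\<in>set (befores (preseq \<sigma>) \<sigma>). Good M) \<and> Fin (postseq \<sigma>))
     \<longleftrightarrow> (\<exists>css\<in>set (List.n_lists (length p2l) (RHOS ls lt)). goodL p2l css \<and>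
            (\<forall>M\<in>set (befL p2l (concat css)). Good (mset M)) \<and> Fin (mset (runL p2l (concat css))))"
proof
  assume "\<exists>\<sigma>. tau_seq 0 (set ls) (trans_of ` set lt) \<sigma> \<and> preseq \<sigma> = mset p2l \<and>
            (\<forall>M\<in>set (befores (preseq \<sigma>) \<sigma>). Good M) \<and> Fin (postseq \<sigma>)"
  then obtain \<sigma> where s: "tau_seq 0 (set ls) (trans_of ` set lt) \<sigma>" "preseq \<sigma> = mset p2l"
     "\<forall>M\<in>set (befores (preseq \<sigma>) \<sigma>). Good M" "Fin (postseq \<sigma>)" by blast
  obtain \<sigma>s where g: "good_dec 0 (set ls) (trans_of ` set lt) \<sigma>s" "\<sigma> = concat \<sigma>s"
    using s(1) unfolding tau_seq_dec by blast
  obtain \<sigma>s' where g': "good_dec 0 (set ls) (trans_of ` set lt) \<sigma>s'" "length \<sigma>s' = length \<sigma>s"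
      "\<forall>\<rho>\<in>set \<sigma>s'. length \<rho> \<le> card (set ls)"
      "preseq (concat \<sigma>s') = preseq (concat \<sigma>s)" "postseq (concat \<sigma>s') = postseq (concat \<sigma>s)"
      "set (befores (preseq (concat \<sigma>s')) (concat \<sigma>s')) \<subseteq> set (befores (preseq (concat \<sigma>s)) (concat \<sigma>s))"
    using shorten_all[OF _ h g(1)] by blast
  have ex1: "\<forall>\<rho>\<in>set \<sigma>s'. \<exists>cs. \<rho> = map tr cs \<and> cs \<noteq> [] \<and> set cs \<subseteq> set (Elist ls lt) \<and> chainL cs"
    using g'(1) unfolding good_dec_def tau1_list by blast
  then obtain css where css: "\<sigma>s' = map (map tr) css" "\<forall>cs\<in>set css. cs \<noteq> [] \<and> set cs \<subseteq> set (Elist ls lt) \<and> chainL cs"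
  proof -
    have "\<forall>\<rho>\<in>set \<sigma>s'. \<exists>cs. \<rho> = map tr cs" using ex1 by blast
    then obtain css0 where "\<sigma>s' = map (map tr) css0" using ex_map_conv[of \<sigma>s' "map tr"] by blast
    moreover have "inj (map tr)"
    proof (rule injI)
      fix x y assume "map tr x = map tr y"
      moreover have "inj tr" by (rule injI) (simp add: tr_def, metis prod.collapse prod_decode_inverse)
      ultimately show "x = y" by (simp add: inj_map_eq_map)
    qed
    moreover have "\<forall>cs\<in>set css0. cs \<noteq> [] \<and> set cs \<subseteq> set (Elist ls lt) \<and> chainL cs"
    proof
      fix cs assume "cs \<in> set css0"
      then have "map tr cs \<in> set \<sigma>s'" using calculation(1) by simp
      then obtain cs' where "map tr cs = map tr cs'" "cs' \<noteq> []" "set cs' \<subseteq> set (Elist ls lt)" "chainL cs'"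
        using ex1 by blast
      moreover have "cs = cs'" using calculation(1) \<open>inj (map tr)\<close> by (simp add: inj_eq)
      ultimately show "cs \<noteq> [] \<and> set cs \<subseteq> set (Elist ls lt) \<and> chainL cs" by simp
    qed
    ultimately show ?thesis using that by blast
  qed
  have cc: "concat \<sigma>s' = map tr (concat css)" using css(1) by (simp add: map_concat)
  have pre': "preseq (concat \<sigma>s') = mset p2l" using g'(4) g(2) s(2) by simp
  have ps1: "mset (preL (concat css)) = mset p2l" using pre' cc preL_mset by metis
  have sumpre: "sum_list (map preseq \<sigma>s') = mset (map (\<lambda>cs. pf (hd cs)) css)"
  proof -
    have "map preseq \<sigma>s' = map (\<lambda>cs. {#pf (hd cs)#}) css"
      using css tr_pre_post_list by (auto simp: o_def)
    then show ?thesis by (simp add: sum_single)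
  qed
  have sumpost: "sum_list (map postseq \<sigma>s') = mset (map (\<lambda>cs. ps (last cs)) css)"
  proof -
    have "map postseq \<sigma>s' = map (\<lambda>cs. {#ps (last cs)#}) css"
      using css tr_pre_post_list by (auto simp: o_def)
    then show ?thesis by (simp add: sum_single)
  qed
  have post': "postseq (concat \<sigma>s') = mset (runL p2l (concat css))"
    using postseq_runu[of "concat \<sigma>s'"] pre' cc runL_mset by metis
  have bef': "befores (preseq (concat \<sigma>s')) (concat \<sigma>s') = map mset (befL p2l (concat css))"
    using pre' cc befL_mset by metis
  have len: "length css = length p2l"
  proof -
    have "length css = length \<sigma>s'" using css(1) by simp
    also have "\<dots> = size (preseq (concat \<sigma>s'))" using good_dec_size[OF g'(1)] by simp
    finally show ?thesis using pre' by simp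
  qed
  have inR: "set css \<subseteq> set (RHOS ls lt)"
  proof
    fix cs assume c: "cs \<in> set css"
    then have "map tr cs \<in> set \<sigma>s'" using css(1) by simp
    then have "length cs \<le> card (set ls)" using g'(3) by fastforce
    then have "length cs \<le> length ls" using card_length[of ls] by simp
    then show "cs \<in> set (RHOS ls lt)" unfolding RHOS_set using css(2) c by blast
  qed
  show "\<exists>css\<in>set (List.n_lists (length p2l) (RHOS ls lt)). goodL p2l css \<and>
            (\<forall>M\<in>set (befL p2l (concat css)). Good (mset M)) \<and> Fin (mset (runL p2l (concat css)))"
  proof (intro bexI[of _ css] conjI)
    show "css \<in> set (List.n_lists (length p2l) (RHOS ls lt))" unfolding set_n_lists using len inR by simp
    show "goodL p2l css" unfolding goodL_def
    proof (intro conjI)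
      show "\<forall>cs\<in>set css. chainL cs" using css(2) by blast
      show "mset (preL (concat css)) = mset (map (\<lambda>cs. pf (hd cs)) css)"
        using g'(1) pre' ps1 sumpre unfolding good_dec_def by simp
      show "mset (map (\<lambda>cs. pf (hd cs)) css) = mset p2l"
        using g'(1) pre' sumpre unfolding good_dec_def by simp
      show "mset (runL p2l (concat css)) = mset (map (\<lambda>cs. ps (last cs)) css)"
        using g'(1) post' sumpost unfolding good_dec_def by simp
    qed
    show "\<forall>M\<in>set (befL p2l (concat css)). Good (mset M)"
    proof
      fix M assume "M \<in> set (befL p2l (concat css))"
      then have "mset M \<in> set (befores (preseq (concat \<sigma>s')) (concat \<sigma>s'))" unfolding bef' by simp
      then have "mset M \<in> set (befores (preseq \<sigma>) \<sigma>)" using g'(6) g(2) by blast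
      then show "Good (mset M)" using s(3) by blast
    qed
    show "Fin (mset (runL p2l (concat css)))" using s(4) g'(5) g(2) post' by simp
  qed
next
  assume "\<exists>css\<in>set (List.n_lists (length p2l) (RHOS ls lt)). goodL p2l css \<and>
            (\<forall>M\<in>set (befL p2l (concat css)). Good (mset M)) \<and> Fin (mset (runL p2l (concat css)))"
  then obtain css where c: "css \<in> set (List.n_lists (length p2l) (RHOS ls lt))" "goodL p2l css"
      "\<forall>M\<in>set (befL p2l (concat css)). Good (mset M)" "Fin (mset (runL p2l (concat css)))" by blast
  have cs1: "\<forall>cs\<in>set css. cs \<noteq> [] \<and> set cs \<subseteq> set (Elist ls lt) \<and> chainL cs"
  proof
    fix cs assume cs: "cs \<in> set css"
    then have "cs \<in> set (RHOS ls lt)" using c(1) unfolding set_n_lists by blast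
    then have "cs \<noteq> [] \<and> set cs \<subseteq> set (Elist ls lt)" unfolding RHOS_set by blast
    moreover have "chainL cs" using c(2) cs unfolding goodL_def by blast
    ultimately show "cs \<noteq> [] \<and> set cs \<subseteq> set (Elist ls lt) \<and> chainL cs" by blast
  qed
  define \<sigma>s where "\<sigma>s = map (map tr) css"
  have cc: "concat \<sigma>s = map tr (concat css)" unfolding \<sigma>s_def by (simp add: map_concat)
  have sumpre: "sum_list (map preseq \<sigma>s) = mset (map (\<lambda>cs. pf (hd cs)) css)"
  proof -
    have "map preseq \<sigma>s = map (\<lambda>cs. {#pf (hd cs)#}) css"
      unfolding \<sigma>s_def using cs1 tr_pre_post_list by (auto simp: o_def)
    then show ?thesis by (simp add: sum_single)
  qed
  have sumpost: "sum_list (map postseq \<sigma>s) = mset (map (\<lambda>cs. ps (last cs)) css)"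
  proof -
    have "map postseq \<sigma>s = map (\<lambda>cs. {#ps (last cs)#}) css"
      unfolding \<sigma>s_def using cs1 tr_pre_post_list by (auto simp: o_def)
    then show ?thesis by (simp add: sum_single)
  qed
  have pre: "preseq (concat \<sigma>s) = mset p2l"
    using c(2) cc preL_mset unfolding goodL_def by metis
  have post: "postseq (concat \<sigma>s) = mset (runL p2l (concat css))"
    using postseq_runu[of "concat \<sigma>s"] pre cc runL_mset by metis
  have bef: "befores (preseq (concat \<sigma>s)) (concat \<sigma>s) = map mset (befL p2l (concat css))"
    using pre cc befL_mset by metis
  have nne: "css \<noteq> []"
  proof
    assume "css = []"
    then have "p2l = []" using c(1) unfolding set_n_lists by simp
    then show False using ne by simp
  qed
  have g: "good_dec 0 (set ls) (trans_of ` set lt) \<sigma>s" unfolding good_dec_def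
  proof (intro conjI)
    show "\<sigma>s \<noteq> []" using nne unfolding \<sigma>s_def by simp
    show "\<forall>\<rho>\<in>set \<sigma>s. tau_1_seq 0 (set ls) (trans_of ` set lt) \<rho>"
      unfolding \<sigma>s_def tau1_list using cs1 by auto
    show "preseq (concat \<sigma>s) = sum_list (map preseq \<sigma>s)" using pre sumpre c(2) unfolding goodL_def by simp
    show "postseq (concat \<sigma>s) = sum_list (map postseq \<sigma>s)" using post sumpost c(2) unfolding goodL_def by simp
  qed
  show "\<exists>\<sigma>. tau_seq 0 (set ls) (trans_of ` set lt) \<sigma> \<and> preseq \<sigma> = mset p2l \<and>
            (\<forall>M\<in>set (befores (preseq \<sigma>) \<sigma>). Good M) \<and> Fin (postseq \<sigma>)"
  proof (intro exI[of _ "concat \<sigma>s"] conjI)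
    show "tau_seq 0 (set ls) (trans_of ` set lt) (concat \<sigma>s)" unfolding tau_seq_dec using g by blast
    show "preseq (concat \<sigma>s) = mset p2l" by (rule pre)
    show "\<forall>M\<in>set (befores (preseq (concat \<sigma>s)) (concat \<sigma>s)). Good M" unfolding bef using c(3) by auto
    show "Fin (postseq (concat \<sigma>s))" unfolding post by (rule c(4))
  qed
qed


definition finA :: "nat list \<Rightarrow> nat list \<times> nat \<times> nat list \<Rightarrow> nat list \<Rightarrow> bool" where
  "finA Rl t F \<longleftrightarrow> addclL Rl (fst t) F \<and> addclL Rl (snd (snd t)) F"

definition finB :: "nat list \<Rightarrow> (nat list \<times> nat \<times> nat list) list \<Rightarrow> nat list \<times> nat \<times> nat list \<Rightarrow> nat list \<Rightarrow> bool" where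
  "finB Rl lt t F \<longleftrightarrow> addclL Rl (fst t) F \<and>
     (\<exists>t2\<in>set lt. mset F = mset (fst t2) \<and> fst (snd t) = fst (snd t2) \<and> addclL Rl (snd (snd t)) (snd (snd t2)))"

definition exL :: "nat list \<Rightarrow> nat list \<Rightarrow> (nat list \<times> nat \<times> nat list) list \<Rightarrow> nat list \<times> nat \<times> nat list \<Rightarrow> nat list \<Rightarrow> (nat list \<Rightarrow> bool) \<Rightarrow> bool" where
  "exL Rl ls lt t p2l Fin \<longleftrightarrow> (\<exists>css\<in>set (List.n_lists (length p2l) (RHOS ls lt)). goodL p2l css \<and>
            (\<forall>M\<in>set (befL p2l (concat css)). addclL Rl (fst t) M) \<and> Fin (runL p2l (concat css)))"

definition chkL :: "nat list \<Rightarrow> nat list \<Rightarrow> (nat list \<times> nat \<times> nat list) list \<Rightarrow> bool" where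
  "chkL Rl ls lt \<longleftrightarrow> (\<forall>t\<in>set lt. \<forall>p2l\<in>set (List.n_lists (length (fst t)) ls). addclL Rl (fst t) p2l \<longrightarrow>
     (isTau t \<and> exL Rl ls lt t p2l (finA Rl t)) \<or> exL Rl ls lt t p2l (finB Rl lt t))"

lemma cl1_list:
  assumes h: "\<forall>t\<in>trans_of ` set lt. set_mset (pre t) \<subseteq> set ls" and ne: "p2l \<noteq> []"
  shows "cl1 0 (set ls) (trans_of ` set lt) (relOf Rl) (pre (trans_of t)) (mset p2l) (trans_of t) \<longleftrightarrow>
     (isTau t \<and> exL Rl ls lt t p2l (finA Rl t)) \<or> exL Rl ls lt t p2l (finB Rl lt t)"
proof -
  let ?T = "trans_of ` set lt" and ?Q = "addcl (relOf Rl)"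
  let ?G = "\<lambda>M. (mset (fst t), M) \<in> ?Q"
  have tt: "tau_seq_trans 0 (trans_of t) \<longleftrightarrow> isTau t" by (simp add: tau_seq_trans_def isTau_def)
  define G where "G = (\<lambda>M. (mset (fst t), M) \<in> ?Q)"
  define FA where "FA = (\<lambda>X. (mset (fst t), X) \<in> ?Q \<and> (mset (snd (snd t)), X) \<in> ?Q)"
  define FB where "FB = (\<lambda>X. (mset (fst t), X) \<in> ?Q \<and> (\<exists>t2\<in>set lt. X = mset (fst t2) \<and> fst (snd t) = fst (snd t2) \<and>
              (mset (snd (snd t)), mset (snd (snd t2))) \<in> ?Q))"
  have A: "(\<exists>\<sigma>. tau_seq 0 (set ls) ?T \<sigma> \<and> preseq \<sigma> = mset p2l \<and> Psi (pre (trans_of t)) \<sigma> ?Q \<and>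
       (pre (trans_of t), postseq \<sigma>) \<in> ?Q \<and> (post (trans_of t), postseq \<sigma>) \<in> ?Q)
     \<longleftrightarrow> exL Rl ls lt t p2l (finA Rl t)"
  proof -
    have "(\<exists>\<sigma>. tau_seq 0 (set ls) ?T \<sigma> \<and> preseq \<sigma> = mset p2l \<and> Psi (pre (trans_of t)) \<sigma> ?Q \<and>
       (pre (trans_of t), postseq \<sigma>) \<in> ?Q \<and> (post (trans_of t), postseq \<sigma>) \<in> ?Q)
      \<longleftrightarrow> (\<exists>\<sigma>. tau_seq 0 (set ls) ?T \<sigma> \<and> preseq \<sigma> = mset p2l \<and> (\<forall>M\<in>set (befores (preseq \<sigma>) \<sigma>). G M) \<and> FA (postseq \<sigma>))"
      unfolding G_def FA_def Psi_def by simp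
    also have "\<dots> \<longleftrightarrow> (\<exists>css\<in>set (List.n_lists (length p2l) (RHOS ls lt)). goodL p2l css \<and>
            (\<forall>M\<in>set (befL p2l (concat css)). G (mset M)) \<and> FA (mset (runL p2l (concat css))))"
      by (rule exists_sigma[OF h ne])
    also have "\<dots> \<longleftrightarrow> exL Rl ls lt t p2l (finA Rl t)"
      unfolding exL_def finA_def G_def FA_def by (simp add: addclL_iff)
    finally show ?thesis .
  qed
  have B: "(\<exists>\<sigma> t2. t2 \<in> ?T \<and> tau_seq 0 (set ls) ?T \<sigma> \<and> preseq \<sigma> = mset p2l \<and> postseq \<sigma> = pre t2 \<and>
       lab (trans_of t) = lab t2 \<and> Psi (pre (trans_of t)) \<sigma> ?Q \<and> (pre (trans_of t), postseq \<sigma>) \<in> ?Q \<and>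
       (post (trans_of t), post t2) \<in> ?Q)
     \<longleftrightarrow> exL Rl ls lt t p2l (finB Rl lt t)"
  proof -
    have "(\<exists>\<sigma> t2. t2 \<in> ?T \<and> tau_seq 0 (set ls) ?T \<sigma> \<and> preseq \<sigma> = mset p2l \<and> postseq \<sigma> = pre t2 \<and>
       lab (trans_of t) = lab t2 \<and> Psi (pre (trans_of t)) \<sigma> ?Q \<and> (pre (trans_of t), postseq \<sigma>) \<in> ?Q \<and>
       (post (trans_of t), post t2) \<in> ?Q)
      \<longleftrightarrow> (\<exists>\<sigma>. tau_seq 0 (set ls) ?T \<sigma> \<and> preseq \<sigma> = mset p2l \<and> (\<forall>M\<in>set (befores (preseq \<sigma>) \<sigma>). G M) \<and> FB (postseq \<sigma>))"
      unfolding G_def FB_def Psi_def by auto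
    also have "\<dots> \<longleftrightarrow> (\<exists>css\<in>set (List.n_lists (length p2l) (RHOS ls lt)). goodL p2l css \<and>
            (\<forall>M\<in>set (befL p2l (concat css)). G (mset M)) \<and> FB (mset (runL p2l (concat css))))"
      by (rule exists_sigma[OF h ne])
    also have "\<dots> \<longleftrightarrow> exL Rl ls lt t p2l (finB Rl lt t)"
      unfolding exL_def finB_def G_def FB_def by (simp add: addclL_iff)
    finally show ?thesis .
  qed
  show ?thesis unfolding cl1_small tt A B ..
qed

lemma p2_conv:
  assumes "relOf Rl \<subseteq> set ls \<times> set ls"
  shows "(\<forall>p2. (mset a, p2) \<in> addcl (relOf Rl) \<longrightarrow> P p2) \<longleftrightarrow>
         (\<forall>p2l\<in>set (List.n_lists (length a) ls). addclL Rl a p2l \<longrightarrow> P (mset p2l))"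
proof
  assume H: "\<forall>p2. (mset a, p2) \<in> addcl (relOf Rl) \<longrightarrow> P p2"
  show "\<forall>p2l\<in>set (List.n_lists (length a) ls). addclL Rl a p2l \<longrightarrow> P (mset p2l)"
    using H addclL_iff by blast
next
  assume H: "\<forall>p2l\<in>set (List.n_lists (length a) ls). addclL Rl a p2l \<longrightarrow> P (mset p2l)"
  show "\<forall>p2. (mset a, p2) \<in> addcl (relOf Rl) \<longrightarrow> P p2"
  proof (intro allI impI)
    fix p2 assume p: "(mset a, p2) \<in> addcl (relOf Rl)"
    obtain p2l where m: "mset p2l = p2" using ex_mset by blast
    have "length p2l = size p2" using m by (metis size_mset)
    then have "length p2l = length a" using addcl_size[OF p] by simp
    moreover have "set p2l \<subseteq> set ls" using addcl_set[OF p assms] m by (metis set_mset_mset)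
    moreover have "addclL Rl a p2l" using p m addclL_iff by blast
    ultimately show "P p2" using H m unfolding set_n_lists by blast
  qed
qed

lemma clause_chk:
  assumes h: "\<forall>t\<in>trans_of ` set lt. set_mset (pre t) \<subseteq> set ls" and r: "relOf Rl \<subseteq> set ls \<times> set ls"
    and ne: "\<forall>t\<in>set lt. fst t \<noteq> []"
  shows "clause 0 (set ls) (trans_of ` set lt) (relOf Rl) \<longleftrightarrow> chkL Rl ls lt"
proof -
  have "clause 0 (set ls) (trans_of ` set lt) (relOf Rl) \<longleftrightarrow>
     (\<forall>t\<in>set lt. \<forall>p2. (pre (trans_of t), p2) \<in> addcl (relOf Rl) \<longrightarrow> cl1 0 (set ls) (trans_of ` set lt) (relOf Rl) (pre (trans_of t)) p2 (trans_of t))"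
    unfolding clause_small by simp
  also have "\<dots> \<longleftrightarrow> (\<forall>t\<in>set lt. \<forall>p2l\<in>set (List.n_lists (length (fst t)) ls). addclL Rl (fst t) p2l \<longrightarrow>
     cl1 0 (set ls) (trans_of ` set lt) (relOf Rl) (pre (trans_of t)) (mset p2l) (trans_of t))"
    using p2_conv[OF r] by simp
  also have "\<dots> \<longleftrightarrow> chkL Rl ls lt"
    unfolding chkL_def
  proof (intro ball_cong refl imp_cong)
    fix t p2l assume t: "t \<in> set lt" and p: "p2l \<in> set (List.n_lists (length (fst t)) ls)"
    have "p2l \<noteq> []" using ne t p unfolding set_n_lists by auto
    then show "cl1 0 (set ls) (trans_of ` set lt) (relOf Rl) (pre (trans_of t)) (mset p2l) (trans_of t) \<longleftrightarrow>
     (isTau t \<and> exL Rl ls lt t p2l (finA Rl t)) \<or> exL Rl ls lt t p2l (finB Rl lt t)"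
      by (rule cl1_list[OF h])
  qed
  finally show ?thesis .
qed

theorem bpb_chk:
  assumes net: "pt_net 0 (set ls) (set la) (trans_of ` set lt)" and R: "set lr \<subseteq> set ls \<times> set ls"
  shows "branching_place_bisim 0 (set ls) (set la) (trans_of ` set lt) (set lr) \<longleftrightarrow>
     chkL (map prod_encode lr) ls lt \<and> chkL (map (\<lambda>q. pe (snd q) (fst q)) lr) ls lt"
proof -
  have h: "\<forall>t\<in>trans_of ` set lt. set_mset (pre t) \<subseteq> set ls" using net unfolding pt_net_def by blast
  have ne: "\<forall>t\<in>set lt. fst t \<noteq> []" using net unfolding pt_net_def by auto
  have r1: "relOf (map prod_encode lr) = set lr" unfolding relOf_def by force
  have r2: "relOf (map (\<lambda>q. pe (snd q) (fst q)) lr) = (set lr)\<inverse>" unfolding relOf_def by force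
  have R2: "(set lr)\<inverse> \<subseteq> set ls \<times> set ls" using R by auto
  show ?thesis
    unfolding bpb_split
    using clause_chk[OF h, of "map prod_encode lr"] clause_chk[OF h, of "map (\<lambda>q. pe (snd q) (fst q)) lr"]
      r1 r2 R R2 ne by simp
qed


lemmas CR = C_const C_id C_Suc C_add C_sub C_mult C_pe C_pf C_ps C_if B_eq B_less B_le B_not B_and B_or B_imp B_const
  C_fold L_cons C_hd L_tl L_rev L_map L_filter L_append L_concat C_length B_all B_ex C_count L_remove1 B_chain L_nlists L_upt

lemma mset_eq_count: "mset xs = mset ys \<longleftrightarrow> (\<forall>x\<in>set xs. count_list xs x = count_list ys x) \<and> (\<forall>x\<in>set ys. count_list xs x = count_list ys x)"
proof
  assume "mset xs = mset ys" then show "(\<forall>x\<in>set xs. count_list xs x = count_list ys x) \<and> (\<forall>x\<in>set ys. count_list xs x = count_list ys x)"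
    by (metis count_mset)
next
  assume a: "(\<forall>x\<in>set xs. count_list xs x = count_list ys x) \<and> (\<forall>x\<in>set ys. count_list xs x = count_list ys x)"
  show "mset xs = mset ys"
  proof (rule multiset_eqI)
    fix x show "count (mset xs) x = count (mset ys) x"
    proof (cases "x \<in> set xs \<or> x \<in> set ys")
      case True then show ?thesis using a by (auto simp: count_mset)
    next
      case False then show ?thesis by (metis count_mset_0_iff)
    qed
  qed
qed

lemma B_msetEq: assumes X: "comp1 X" and Y: "comp1 Y"
  shows "comp1b (\<lambda>z. mset (list_decode (X z)) = mset (list_decode (Y z)))"
proof -
  have "comp1b (\<lambda>z. (\<forall>x\<in>set (list_decode (X z)). count_list (list_decode (X z)) x = count_list (list_decode (Y z)) x) \<and>
     (\<forall>x\<in>set (list_decode (Y z)). count_list (list_decode (X z)) x = count_list (list_decode (Y z)) x))"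
    by (intro CR comp1_o1[OF X] comp1_o1[OF Y] X Y)
  then show ?thesis by (rule comp1b_eq) (simp only: mset_eq_count)
qed

lemma B_addclL: assumes RL: "comp1 RL" and X: "comp1 X" and Y: "comp1 Y"
  shows "comp1b (\<lambda>z. addclL (list_decode (RL z)) (list_decode (X z)) (list_decode (Y z)))"
proof -
  have "comp1b (\<lambda>z. \<exists>q\<in>set (list_decode (list_encode (map list_encode (List.n_lists (length (list_decode (X z))) (list_decode (RL z)))))).
      mset (list_decode (list_encode (map (\<lambda>y. pf y) (list_decode q)))) = mset (list_decode (X z)) \<and>
      mset (list_decode (list_encode (map (\<lambda>y. ps y) (list_decode q)))) = mset (list_decode (Y z)))"
    by (intro CR B_msetEq comp1_o1[OF X] comp1_o1[OF Y] comp1_o1[OF RL] X Y RL)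
  then show ?thesis by (rule comp1b_eq) (auto simp: addclL_def)
qed

lemma foldl_enc': "foldl (\<lambda>acc y. list_encode (g y (list_decode acc))) c xs = list_encode (foldl (\<lambda>acc y. g y acc) (list_decode c) xs)"
  by (induction xs arbitrary: c) auto

lemma preL_foldr: "preL cs = foldr (\<lambda>y acc. pf y # remove1 (ps y) acc) cs []"
  by (induction cs) auto

lemma preL_foldl: "preL cs = foldl (\<lambda>acc y. pf y # remove1 (ps y) acc) [] (rev cs)"
  unfolding preL_foldr foldr_conv_foldl ..

lemma L_preL: assumes L: "comp1 L" shows "comp1 (\<lambda>z. list_encode (preL (list_decode (L z))))"
proof -
  have c: "comp1 (\<lambda>z. foldl (\<lambda>acc y. list_encode (pf y # list_decode (list_encode (remove1 (ps y) (list_decode acc))))) (list_encode []) (list_decode (list_encode (rev (list_decode (L z))))))"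
    by (intro CR L)
  show ?thesis
    by (rule comp1_eq[OF c]) (simp only: list_encode_inverse foldl_enc'[where g="\<lambda>y acc. pf y # remove1 (ps y) acc"] preL_foldl)
qed

lemma updL_fun: "updL = (\<lambda>ml c. ps c # remove1 (pf c) ml)" by (intro ext) (simp add: updL_def)

lemma L_runL: assumes M: "comp1 M" and L: "comp1 L" shows "comp1 (\<lambda>z. list_encode (runL (list_decode (M z)) (list_decode (L z))))"
proof -
  have c: "comp1 (\<lambda>z. foldl (\<lambda>acc y. list_encode (ps y # list_decode (list_encode (remove1 (pf y) (list_decode acc))))) (M z) (list_decode (L z)))"
    by (intro CR L M)
  show ?thesis
    by (rule comp1_eq[OF c]) (simp only: list_encode_inverse foldl_enc'[where g="\<lambda>y acc. ps y # remove1 (pf y) acc"] runL_def updL_fun)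
qed

definition bstep :: "nat \<Rightarrow> nat \<Rightarrow> nat" where
  "bstep s c = pe (list_encode (ps c # list_decode (list_encode (remove1 (pf c) (list_decode (pf s)))))) (list_encode (pf s # list_decode (ps s)))"

lemma foldl_bstep: "foldl bstep (pe mc Lc) cs = pe (list_encode (runL (list_decode mc) cs)) (list_encode (rev (map list_encode (befL (list_decode mc) cs)) @ list_decode Lc))"
proof (induction cs arbitrary: mc Lc)
  case Nil then show ?case by (simp add: runL_def)
next
  case (Cons c cs)
  have "foldl bstep (pe mc Lc) (c # cs) = foldl bstep (pe (list_encode (updL (list_decode mc) c)) (list_encode (mc # list_decode Lc))) cs"
    by (simp add: bstep_def updL_def)
  also have "\<dots> = pe (list_encode (runL (list_decode mc) (c # cs))) (list_encode (rev (map list_encode (befL (list_decode mc) (c # cs))) @ list_decode Lc))"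
    unfolding Cons.IH by (simp add: runL_def)
  finally show ?case .
qed

lemma L_befL: assumes M: "comp1 M" and L: "comp1 L" shows "comp1 (\<lambda>z. list_encode (map list_encode (befL (list_decode (M z)) (list_decode (L z)))))"
proof -
  have c: "comp1 (\<lambda>z. list_encode (rev (list_decode (ps (foldl (\<lambda>acc y. bstep acc y) (pe (M z) (list_encode [])) (list_decode (L z)))))))"
    unfolding bstep_def by (intro CR L M)
  show ?thesis
    by (rule comp1_eq[OF c]) (simp add: foldl_bstep)
qed

definition goodL' :: "nat list \<Rightarrow> nat list list \<Rightarrow> bool" where
  "goodL' p2l css \<longleftrightarrow> (\<forall>cs\<in>set css. chainL cs) \<and> mset (preL (concat css)) = mset (map (\<lambda>cs. pf (hd cs)) css) \<and>
     mset (map (\<lambda>cs. pf (hd cs)) css) = mset p2l \<and> mset (runL p2l (concat css)) = mset (map (\<lambda>cs. ps (hd (rev cs))) css)"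

lemma B_goodL': assumes P: "comp1 P" and CS: "comp1 CS"
  shows "comp1b (\<lambda>z. goodL' (list_decode (P z)) (map list_decode (list_decode (CS z))))"
proof -
  have c: "comp1b (\<lambda>z. (\<forall>c\<in>set (list_decode (CS z)). chainL (list_decode c)) \<and>
     mset (list_decode (list_encode (preL (list_decode (list_encode (concat (map list_decode (list_decode (CS z))))))))) =
       mset (list_decode (list_encode (map (\<lambda>c. pf (hd (list_decode c))) (list_decode (CS z))))) \<and>
     mset (list_decode (list_encode (map (\<lambda>c. pf (hd (list_decode c))) (list_decode (CS z))))) = mset (list_decode (P z)) \<and>
     mset (list_decode (list_encode (runL (list_decode (P z)) (list_decode (list_encode (concat (map list_decode (list_decode (CS z))))))))) =
       mset (list_decode (list_encode (map (\<lambda>c. ps (hd (list_decode (list_encode (rev (list_decode c)))))) (list_decode (CS z))))))"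
    by (intro CR B_msetEq L_preL L_runL P CS)
  show ?thesis by (rule comp1b_eq[OF c]) (simp add: goodL'_def o_def)
qed


definition tA :: "nat \<Rightarrow> nat" where "tA c = hd (list_decode c)"
definition tL :: "nat \<Rightarrow> nat" where "tL c = hd (list_decode (list_encode (tl (list_decode c))))"
definition tB :: "nat \<Rightarrow> nat" where "tB c = hd (list_decode (list_encode (tl (list_decode (list_encode (tl (list_decode c)))))))"
definition dtr :: "nat \<Rightarrow> nat list \<times> nat \<times> nat list" where "dtr c = (list_decode (tA c), tL c, list_decode (tB c))"

lemma dtr_enc: "dtr (enc_trans t) = t"
  by (cases t) (simp add: dtr_def tA_def tL_def tB_def enc_trans_def)

lemma C_tA: "comp1 C \<Longrightarrow> comp1 (\<lambda>z. tA (C z))" unfolding tA_def by (intro CR)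
lemma C_tL: "comp1 C \<Longrightarrow> comp1 (\<lambda>z. tL (C z))" unfolding tL_def by (intro CR)
lemma C_tB: "comp1 C \<Longrightarrow> comp1 (\<lambda>z. tB (C z))" unfolding tB_def by (intro CR)

lemmas CR2 = CR C_tA C_tL C_tB B_msetEq B_addclL L_preL L_runL L_befL B_goodL'

lemma Elist_dtr: "Elist ls (map dtr cs) = map (\<lambda>c. pe (hd (list_decode (tA c))) (hd (list_decode (tB c))))
    (filter (\<lambda>c. tL c = 0 \<and> length (list_decode (tA c)) = 1 \<and> length (list_decode (tB c)) = 1) cs) @ map (\<lambda>s. pe s s) ls"
  by (simp add: Elist_def filter_map o_def isTau_def dtr_def)

lemma L_Elist: assumes LS: "comp1 LS" and LT: "comp1 LT"
  shows "comp1 (\<lambda>z. list_encode (Elist (list_decode (LS z)) (map dtr (list_decode (LT z)))))"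
proof -
  have c: "comp1 (\<lambda>z. list_encode (list_decode (list_encode (map (\<lambda>c. pe (hd (list_decode (tA c))) (hd (list_decode (tB c))))
    (list_decode (list_encode (filter (\<lambda>c. tL c = 0 \<and> length (list_decode (tA c)) = 1 \<and> length (list_decode (tB c)) = 1) (list_decode (LT z))))))) @
     list_decode (list_encode (map (\<lambda>s. pe s s) (list_decode (LS z))))))"
    by (intro CR2 LS LT)
  show ?thesis by (rule comp1_eq[OF c]) (simp only: Elist_dtr list_encode_inverse)
qed

lemma L_RHOS: assumes LS: "comp1 LS" and LT: "comp1 LT"
  shows "comp1 (\<lambda>z. list_encode (map list_encode (RHOS (list_decode (LS z)) (map dtr (list_decode (LT z))))))"
proof -
  have c: "comp1 (\<lambda>z. list_encode (concat (map list_decode (list_decode (list_encode (map (\<lambda>j. list_encode (map list_encode (List.n_lists (Suc j)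
        (list_decode (list_encode (Elist (list_decode (LS z)) (map dtr (list_decode (LT z))))))))) (list_decode (list_encode [0..<length (list_decode (LS z))]))))))))"
    by (intro CR2 L_Elist LS LT comp1_o1[OF LS] comp1_o1[OF LT])
  show ?thesis by (rule comp1_eq[OF c]) (simp add: RHOS_def map_concat o_def)
qed

lemma n_lists_map: "List.n_lists n (map f xs) = map (map f) (List.n_lists n xs)"
  by (induction n) (simp_all add: map_concat o_def)

lemma set_n_lists_ne: "css \<in> set (List.n_lists n (RHOS ls lt)) \<Longrightarrow> \<forall>cs\<in>set css. cs \<noteq> []"
proof
  fix cs assume "css \<in> set (List.n_lists n (RHOS ls lt))" "cs \<in> set css"
  then have "cs \<in> set (RHOS ls lt)" unfolding set_n_lists by blast
  then show "cs \<noteq> []" unfolding RHOS_set by blast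
qed

lemma goodL'_eq: "\<forall>cs\<in>set css. cs \<noteq> [] \<Longrightarrow> goodL' p css = goodL p css"
proof -
  assume "\<forall>cs\<in>set css. cs \<noteq> []"
  then have e: "map (\<lambda>cs. ps (hd (rev cs))) css = map (\<lambda>cs. ps (last cs)) css"
    by (auto simp: hd_rev)
  show ?thesis unfolding goodL'_def goodL_def e by (rule refl)
qed

lemma exL_alt: "exL Rl ls lt t p Fin \<longleftrightarrow> (\<exists>css\<in>set (List.n_lists (length p) (RHOS ls lt)). goodL' p css \<and>
            (\<forall>M\<in>set (befL p (concat css)). addclL Rl (fst t) M) \<and> Fin (runL p (concat css)))"
  unfolding exL_def
proof (rule bex_cong[OF refl])
  fix css assume "css \<in> set (List.n_lists (length p) (RHOS ls lt))"
  then have "goodL' p css = goodL p css" by (intro goodL'_eq set_n_lists_ne)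
  then show "(goodL p css \<and> (\<forall>M\<in>set (befL p (concat css)). addclL Rl (fst t) M) \<and> Fin (runL p (concat css))) =
    (goodL' p css \<and> (\<forall>M\<in>set (befL p (concat css)). addclL Rl (fst t) M) \<and> Fin (runL p (concat css)))" by simp
qed

lemma bex_map: "(\<exists>x\<in>set (map f xs). P x) \<longleftrightarrow> (\<exists>x\<in>set xs. P (f x))" by auto

lemma B_exA: assumes RL: "comp1 RL" and LS: "comp1 LS" and LT: "comp1 LT" and Tc: "comp1 Tc" and P: "comp1 P"
  shows "comp1b (\<lambda>z. exL (list_decode (RL z)) (list_decode (LS z)) (map dtr (list_decode (LT z))) (dtr (Tc z)) (list_decode (P z)) (finA (list_decode (RL z)) (dtr (Tc z))))"
proof -
  have c: "comp1b (\<lambda>z. \<exists>c\<in>set (list_decode (list_encode (map list_encode (List.n_lists (length (list_decode (P z))) (list_decode (list_encode (map list_encode (RHOS (list_decode (LS z)) (map dtr (list_decode (LT z))))))))))).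
   goodL' (list_decode (P z)) (map list_decode (list_decode c)) \<and>
   (\<forall>m\<in>set (list_decode (list_encode (map list_encode (befL (list_decode (P z)) (list_decode (list_encode (concat (map list_decode (list_decode c))))))))). addclL (list_decode (RL z)) (list_decode (tA (Tc z))) (list_decode m)) \<and>
   (addclL (list_decode (RL z)) (list_decode (tA (Tc z))) (list_decode (list_encode (runL (list_decode (P z)) (list_decode (list_encode (concat (map list_decode (list_decode c)))))))) \<and>
    addclL (list_decode (RL z)) (list_decode (tB (Tc z))) (list_decode (list_encode (runL (list_decode (P z)) (list_decode (list_encode (concat (map list_decode (list_decode c))))))))))"
    by (intro CR2 L_RHOS RL LS LT Tc P comp1_o1[OF RL] comp1_o1[OF LS] comp1_o1[OF LT] comp1_o1[OF Tc] comp1_o1[OF P])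
  show ?thesis by (rule comp1b_eq[OF c]) (simp add: exL_alt finA_def dtr_def n_lists_map bex_map o_def)
qed

lemma B_exB: assumes RL: "comp1 RL" and LS: "comp1 LS" and LT: "comp1 LT" and Tc: "comp1 Tc" and P: "comp1 P"
  shows "comp1b (\<lambda>z. exL (list_decode (RL z)) (list_decode (LS z)) (map dtr (list_decode (LT z))) (dtr (Tc z)) (list_decode (P z)) (finB (list_decode (RL z)) (map dtr (list_decode (LT z))) (dtr (Tc z))))"
proof -
  have c: "comp1b (\<lambda>z. \<exists>c\<in>set (list_decode (list_encode (map list_encode (List.n_lists (length (list_decode (P z))) (list_decode (list_encode (map list_encode (RHOS (list_decode (LS z)) (map dtr (list_decode (LT z))))))))))).
   goodL' (list_decode (P z)) (map list_decode (list_decode c)) \<and>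
   (\<forall>m\<in>set (list_decode (list_encode (map list_encode (befL (list_decode (P z)) (list_decode (list_encode (concat (map list_decode (list_decode c))))))))). addclL (list_decode (RL z)) (list_decode (tA (Tc z))) (list_decode m)) \<and>
   (addclL (list_decode (RL z)) (list_decode (tA (Tc z))) (list_decode (list_encode (runL (list_decode (P z)) (list_decode (list_encode (concat (map list_decode (list_decode c)))))))) \<and>
    (\<exists>c2\<in>set (list_decode (LT z)). mset (list_decode (list_encode (runL (list_decode (P z)) (list_decode (list_encode (concat (map list_decode (list_decode c)))))))) = mset (list_decode (tA c2)) \<and>
        tL (Tc z) = tL c2 \<and> addclL (list_decode (RL z)) (list_decode (tB (Tc z))) (list_decode (tB c2)))))"
    by (intro CR2 L_RHOS RL LS LT Tc P comp1_o1[OF RL] comp1_o1[OF LS] comp1_o1[OF LT] comp1_o1[OF Tc] comp1_o1[OF P])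
  show ?thesis by (rule comp1b_eq[OF c]) (simp add: exL_alt finB_def dtr_def n_lists_map bex_map o_def)
qed

lemma ball_map: "(\<forall>x\<in>set (map f xs). P x) \<longleftrightarrow> (\<forall>x\<in>set xs. P (f x))" by auto

lemma B_chk: assumes RL: "comp1 RL" and LS: "comp1 LS" and LT: "comp1 LT"
  shows "comp1b (\<lambda>z. chkL (list_decode (RL z)) (list_decode (LS z)) (map dtr (list_decode (LT z))))"
proof -
  have c: "comp1b (\<lambda>z. \<forall>c\<in>set (list_decode (LT z)). \<forall>p\<in>set (list_decode (list_encode (map list_encode (List.n_lists (length (list_decode (tA c))) (list_decode (LS z)))))).
     addclL (list_decode (RL z)) (list_decode (tA c)) (list_decode p) \<longrightarrow>
     ((tL c = 0 \<and> length (list_decode (tA c)) = 1 \<and> length (list_decode (tB c)) = 1) \<and>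
        exL (list_decode (RL z)) (list_decode (LS z)) (map dtr (list_decode (LT z))) (dtr c) (list_decode p) (finA (list_decode (RL z)) (dtr c))) \<or>
     exL (list_decode (RL z)) (list_decode (LS z)) (map dtr (list_decode (LT z))) (dtr c) (list_decode p) (finB (list_decode (RL z)) (map dtr (list_decode (LT z))) (dtr c)))"
    by (intro CR2 B_exA B_exB RL LS LT comp1_o1[OF RL] comp1_o1[OF LS] comp1_o1[OF LT])
  show ?thesis
  proof (rule comp1b_eq[OF c])
    fix z
    show "(\<forall>c\<in>set (list_decode (LT z)). \<forall>p\<in>set (list_decode (list_encode (map list_encode (List.n_lists (length (list_decode (tA c))) (list_decode (LS z)))))).
     addclL (list_decode (RL z)) (list_decode (tA c)) (list_decode p) \<longrightarrow>
     ((tL c = 0 \<and> length (list_decode (tA c)) = 1 \<and> length (list_decode (tB c)) = 1) \<and>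
        exL (list_decode (RL z)) (list_decode (LS z)) (map dtr (list_decode (LT z))) (dtr c) (list_decode p) (finA (list_decode (RL z)) (dtr c))) \<or>
     exL (list_decode (RL z)) (list_decode (LS z)) (map dtr (list_decode (LT z))) (dtr c) (list_decode p) (finB (list_decode (RL z)) (map dtr (list_decode (LT z))) (dtr c)))
      = chkL (list_decode (RL z)) (list_decode (LS z)) (map dtr (list_decode (LT z)))"
      unfolding chkL_def ball_map list_encode_inverse
      by (simp add: isTau_def dtr_def o_def)
  qed
qed


definition LSc :: "nat \<Rightarrow> nat" where "LSc z = hd (list_decode z)"
definition LTc :: "nat \<Rightarrow> nat" where "LTc z = hd (list_decode (list_encode (tl (list_decode (list_encode (tl (list_decode z)))))))"
definition LRc :: "nat \<Rightarrow> nat" where "LRc z = hd (list_decode (list_encode (tl (list_decode (list_encode (tl (list_decode (list_encode (tl (list_decode z))))))))))"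
definition SWc :: "nat \<Rightarrow> nat" where "SWc z = list_encode (map (\<lambda>q. pe (ps q) (pf q)) (list_decode (LRc z)))"

definition dec :: "nat \<Rightarrow> nat" where
  "dec z = (if chkL (list_decode (LRc z)) (list_decode (LSc z)) (map dtr (list_decode (LTc z))) \<and>
               chkL (list_decode (SWc z)) (list_decode (LSc z)) (map dtr (list_decode (LTc z))) then 1 else 0)"

lemma comp_LSc: "comp1 LSc" unfolding LSc_def by (intro CR2)
lemma comp_LTc: "comp1 LTc" unfolding LTc_def by (intro CR2)
lemma comp_LRc: "comp1 LRc" unfolding LRc_def by (intro CR2)
lemma comp_SWc: "comp1 SWc" unfolding SWc_def by (intro CR2 comp1_o1[OF comp_LRc])

lemma comp_dec: "comp1 dec"
proof -
  have "comp1b (\<lambda>z. chkL (list_decode (LRc z)) (list_decode (LSc z)) (map dtr (list_decode (LTc z))) \<and>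
               chkL (list_decode (SWc z)) (list_decode (LSc z)) (map dtr (list_decode (LTc z))))"
    by (intro B_and B_chk comp_LSc comp_LTc comp_LRc comp_SWc)
  then show ?thesis unfolding comp1b_def dec_def .
qed

lemma dec_correct:
  assumes net: "pt_net 0 (set ls) (set la) (trans_of ` set lt)" and R: "set lr \<subseteq> set ls \<times> set ls"
  shows "dec (enc_input ls la lt lr) = (if branching_place_bisim 0 (set ls) (set la) (trans_of ` set lt) (set lr) then 1 else 0)"
proof -
  let ?n = "enc_input ls la lt lr"
  have d: "list_decode ?n = [list_encode ls, list_encode la, list_encode (map enc_trans lt), list_encode (map prod_encode lr)]"
    by (simp add: enc_input_def)
  have 1: "list_decode (LSc ?n) = ls" unfolding LSc_def d by simp
  have 2: "map dtr (list_decode (LTc ?n)) = lt" unfolding LTc_def d by (simp add: o_def dtr_enc)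
  have 3: "list_decode (LRc ?n) = map prod_encode lr" unfolding LRc_def d by simp
  have 4: "list_decode (SWc ?n) = map (\<lambda>q. pe (snd q) (fst q)) lr" unfolding SWc_def 3 by (simp add: o_def)
  show ?thesis unfolding dec_def 1 2 3 4 bpb_chk[OF net R] ..
qed

theorem mainTheorem9:
  shows "\<exists>f :: recf. \<forall>(ls :: nat list) (la :: nat list) lt (lr :: (nat \<times> nat) list)
      (S :: nat set) (A :: nat set) (T :: (nat, nat) trans set) (R :: (nat \<times> nat) set).
      set ls = S \<and> set la = A \<and> T = trans_of ` set lt \<and> set lr = R \<and>
      pt_net 0 S A T \<and> R \<subseteq> S \<times> S \<longrightarrow>
      eval f [enc_input ls la lt lr] (if branching_place_bisim 0 S A T R then 1 else 0)"
proof -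
  obtain r where r: "\<And>xs. length xs = 1 \<Longrightarrow> eval r xs (dec (xs ! 0))"
    using comp_dec unfolding comp1_def compn_def by blast
  show ?thesis
  proof (intro exI[of _ r] allI impI)
    fix ls la :: "nat list" and lt and lr :: "(nat \<times> nat) list" and S A :: "nat set" and T :: "(nat, nat) trans set" and R :: "(nat \<times> nat) set"
    assume a: "set ls = S \<and> set la = A \<and> T = trans_of ` set lt \<and> set lr = R \<and> pt_net 0 S A T \<and> R \<subseteq> S \<times> S"
    then have "dec (enc_input ls la lt lr) = (if branching_place_bisim 0 S A T R then 1 else 0)"
      using dec_correct[of ls la lt lr] by auto
    moreover have "eval r [enc_input ls la lt lr] (dec (enc_input ls la lt lr))" using r[of "[enc_input ls la lt lr]"] by simp
    ultimately show "eval r [enc_input ls la lt lr] (if branching_place_bisim 0 S A T R then 1 else 0)" by simp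
  qed
qed


end
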